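(* {\rm a)} We have $$\sum^{*}_{N\mathfrak{a}<\sqrt{\Delta}/2} \frac{\sqrt{\Delta}}{N\mathfrak{a}} + O\Bigl(\sum^{*}_{N\mathfrak{a}<\sqrt{\Delta}} 1\Bigr) < \sum_{i=1}^s u_i < \sum^{*}_{N\mathfrak{a}<\sqrt{\Delta}} \frac{\sqrt{\Delta}}{N\mathfrak{a}},$$ where $\sum^{*}$ denotes the sum over principal primitive ideals $\mathfrak{a}$ of $\mathcal{O}_K$. {\rm b)} We have $$\sum^{-}_{N\mathfrak{a}<\sqrt{\Delta}/2} \frac{\sqrt{\Delta}}{N\mathfrak{a}} + O\Bigl(\sum^{-}_{N\mathfrak{a}<\sqrt{\Delta}} 1\Bigr) < M_D < \sum^{-}_{N\mathfrak{a}<\sqrt{\Delta}} \frac{\sqrt{\Delta}}{N\mathfrak{a}},$$ where $\sum^{-}$ denotes the sum over principal primitive ideals generated by an element with negative norm.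
   Context: Let $K=\mathbb{Q}(\sqrt D)$ with $D>1$ squarefree, $\mathcal{O}_K$ its ring of integers and $\Delta\in\{D,4D\}$ its discriminant. Let $\omega_D=\sqrt D$ if $D\equiv 2,3 \pmod 4$ and $\omega_D=\frac{1+\sqrt D}{2}$ if $D\equiv 1\pmod 4$, and write its periodic continued fraction expansion as $\omega_D=[u_0,\overline{u_1,u_2,\dots,u_s}]$ with period length $s$ minimal. Define $M_D=u_1+u_3+\dots+u_{s-1}$ if $s$ is even, $M_D=2u_0+u_1+\dots+u_{s-1}$ if $s$ is odd and $D\equiv 2,3\pmod 4$, and $M_D=2u_0+u_1+\dots+u_{s-1}-1$ if $s$ is odd and $D\equiv 1\pmod 4$. An ideal is primitive if it is not divisible by a rational integer other than $1$; $N\mathfrak{a}$ denotes the norm of the ideal $\mathfrak{a}$. *)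

theory Defs
  imports Complex_Main "HOL-Computational_Algebra.Squarefree"
begin

text \<open>Real quadratic field K = Q(sqrt D), D > 1 squarefree, realised inside the reals.\<close>

definition omega :: "int \<Rightarrow> real" where
  "omega D = (if D mod 4 = 1 then (1 + sqrt (real_of_int D)) / 2 else sqrt (real_of_int D))"

definition omega_conj :: "int \<Rightarrow> real" where
  "omega_conj D = (if D mod 4 = 1 then (1 - sqrt (real_of_int D)) / 2 else - sqrt (real_of_int D))"

definition disc :: "int \<Rightarrow> int" where
  "disc D = (if D mod 4 = 1 then D else 4 * D)"

definition OK :: "int \<Rightarrow> real set" where
  "OK D = {of_int a + of_int b * omega D | a b. True}"

definition nonzero_ideal :: "int \<Rightarrow> real set \<Rightarrow> bool" where
  "nonzero_ideal D I \<longleftrightarrow> I \<subseteq> OK D \<and> 0 \<in> I \<and> I \<noteq> {0} \<and>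
     (\<forall>x\<in>I. \<forall>y\<in>I. x + y \<in> I) \<and> (\<forall>r\<in>OK D. \<forall>x\<in>I. r * x \<in> I)"

definition ideal_norm :: "int \<Rightarrow> real set \<Rightarrow> nat" where
  "ideal_norm D I = card ((\<lambda>x. {y \<in> OK D. y - x \<in> I}) ` OK D)"

definition primitive :: "int \<Rightarrow> real set \<Rightarrow> bool" where
  "primitive D I \<longleftrightarrow> (\<forall>n::int. n > 1 \<longrightarrow> \<not> I \<subseteq> {of_int n * x | x. x \<in> OK D})"

definition generates :: "int \<Rightarrow> real \<Rightarrow> real set \<Rightarrow> bool" where
  "generates D \<alpha> I \<longleftrightarrow> \<alpha> \<in> OK D \<and> I = {\<alpha> * x | x. x \<in> OK D}"

definition neg_norm :: "int \<Rightarrow> real \<Rightarrow> bool" where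
  "neg_norm D \<alpha> \<longleftrightarrow> (\<exists>a b :: int. \<alpha> = of_int a + of_int b * omega D \<and>
      (of_int a + of_int b * omega D) * (of_int a + of_int b * omega_conj D) < 0)"

definition PP :: "int \<Rightarrow> real \<Rightarrow> real set set" where
  "PP D X = {I. nonzero_ideal D I \<and> primitive D I \<and> (\<exists>\<alpha>. generates D \<alpha> I)
               \<and> real (ideal_norm D I) < X}"

definition PN :: "int \<Rightarrow> real \<Rightarrow> real set set" where
  "PN D X = {I. nonzero_ideal D I \<and> primitive D I \<and> (\<exists>\<alpha>. generates D \<alpha> I \<and> neg_norm D \<alpha>)
               \<and> real (ideal_norm D I) < X}"

fun cf_rem :: "real \<Rightarrow> nat \<Rightarrow> real" where
  "cf_rem x 0 = x"
| "cf_rem x (Suc n) = 1 / (cf_rem x n - of_int \<lfloor>cf_rem x n\<rfloor>)"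

definition cf :: "real \<Rightarrow> nat \<Rightarrow> int" where
  "cf x n = \<lfloor>cf_rem x n\<rfloor>"

definition cf_period :: "real \<Rightarrow> nat" where
  "cf_period x = (LEAST s. s > 0 \<and> (\<forall>n\<ge>1. cf x (n + s) = cf x n))"

definition MD :: "int \<Rightarrow> int" where
  "MD D = (let s = cf_period (omega D); u = cf (omega D) in
     if even s then (\<Sum>i\<in>{i. i \<in> {1..<s} \<and> odd i}. u i)
     else 2 * u 0 + (\<Sum>i\<in>{1..<s}. u i) - (if D mod 4 = 1 then 1 else 0))"

end

theory Submission
  imports Defs
begin


lemma sqrt_int_irrational:
  fixes n :: int
  assumes "n > 1" "squarefree n"
  shows "sqrt (real_of_int n) \<notin> \<rat>"
proof
  assume "sqrt (real_of_int n) \<in> \<rat>"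
  then obtain m k :: nat where k: "k \<noteq> 0" and sr: "\<bar>sqrt (real_of_int n)\<bar> = m / k" and cop: "coprime m k"
    by (rule Rats_abs_nat_div_natE)
  have "sqrt (real_of_int n) \<ge> 0" using assms by simp
  then have "real m = sqrt (real_of_int n) * k" using sr k by (simp add: field_simps)
  then have "real m ^ 2 = real_of_int n * real k ^ 2" using assms by (simp add: power_mult_distrib)
  then have eq: "int m ^ 2 = n * int k ^ 2"
    by (metis of_int_eq_iff of_int_mult of_int_of_nat_eq of_int_power)
  have "int k ^ 2 dvd int m ^ 2" using eq by simp
  moreover have "coprime (int k ^ 2) (int m ^ 2)" using cop by (simp add: coprime_commute)
  ultimately have "is_unit (int k ^ 2)" by (meson coprime_absorb_right coprime_common_divisor dvd_refl)
  then have "int k * int k = 1" by (simp add: power2_eq_square)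
  then have "k * k = 1" by (metis of_nat_mult of_nat_1 of_nat_eq_iff)
  then have k1: "k = 1" by simp
  then have "n = int m ^ 2" using eq by simp
  then have "int m ^ 2 dvd n" by simp
  then have "int m dvd 1" using assms(2) squarefreeD by blast
  then have "n = 1" using \<open>n = int m ^ 2\<close> by simp
  then show False using assms by simp
qed

locale qf =
  fixes D :: int
  assumes D1: "D > 1" and sqf: "squarefree D"
begin

definition sg :: int where "sg = (if D mod 4 = 1 then 1 else 0)"
definition c0 :: int where "c0 = (sg - disc D) div 4"
definition sq :: real where "sq = sqrt (real_of_int (disc D))"
abbreviation w where "w \<equiv> omega D"
abbreviation w' where "w' \<equiv> omega_conj D"

lemma sqD_irr: "sqrt (real_of_int D) \<notin> \<rat>" using sqrt_int_irrational D1 sqf by blast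

lemma disc_pos: "disc D > 0" using D1 by (simp add: disc_def)

lemma sq_pos: "sq > 0" using disc_pos by (simp add: sq_def)

lemma sq_sq: "sq * sq = real_of_int (disc D)"
  using disc_pos by (simp add: sq_def)

lemma D_mod: "D mod 4 = 1 \<or> D mod 4 = 2 \<or> D mod 4 = 3"
proof -
  have "\<not> (2::int)^2 dvd D"
  proof
    assume "(2::int)^2 dvd D"
    then have "(2::int) dvd 1" using sqf squarefreeD by blast
    then show False by simp
  qed
  then have "D mod 4 \<noteq> 0" by auto
  then show ?thesis by auto
qed

lemma sq_eq: "sq = (if D mod 4 = 1 then sqrt (real_of_int D) else 2 * sqrt (real_of_int D))"
proof (cases "D mod 4 = 1")
  case False
  have "sqrt (real_of_int (4*D)) = sqrt 4 * sqrt (real_of_int D)" by (simp add: real_sqrt_mult)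
  then show ?thesis using False by (simp add: sq_def disc_def)
qed (simp add: sq_def disc_def)

lemma w_plus: "w + w' = sg"
  by (auto simp: omega_def omega_conj_def sg_def field_simps)

lemma w_minus: "w - w' = sq"
  by (simp add: omega_def omega_conj_def sq_eq field_simps)

lemma c0_eq: "4 * c0 = sg - disc D"
proof -
  have "4 dvd sg - disc D"
  proof (cases "D mod 4 = 1")
    case True then show ?thesis by (simp add: sg_def disc_def) presburger
  qed (simp add: sg_def disc_def)
  then show ?thesis by (simp add: c0_def)
qed

lemma w_times: "w * w' = c0"
proof -
  have e: "4 * (w * w') = (w + w') * (w + w') - (w - w') * (w - w')" by (simp add: algebra_simps)
  have "sg * sg = sg" by (simp add: sg_def)
  then have "4 * (w * w') = real_of_int (sg - disc D)"
    using e w_plus w_minus sq_sq by (simp add: of_int_mult[symmetric] del: of_int_mult)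
  then have "4 * (w * w') = 4 * real_of_int c0" using c0_eq
    by (metis of_int_eq_iff of_int_mult of_int_numeral)
  then show ?thesis by simp
qed

lemma w_sq: "w * w = sg * w - c0"
proof -
  have e: "w' = sg - w" using w_plus by simp
  have "w * w' = w * sg - w * w" unfolding e by (simp add: right_diff_distrib)
  then show ?thesis using w_times by (simp add: mult.commute)
qed

lemma w'_sq: "w' * w' = sg * w' - c0"
proof -
  have e: "w = sg - w'" using w_plus by simp
  have "w * w' = w' * sg - w' * w'" unfolding e by (simp add: algebra_simps)
  then show ?thesis using w_times by (simp add: mult.commute)
qed

lemma sq_irr: "sq \<notin> \<rat>"
proof
  assume "sq \<in> \<rat>"
  then have "sq / (if D mod 4 = 1 then 1 else 2) \<in> \<rat>" by (auto intro: Rats_divide)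
  then show False using sqD_irr by (simp add: sq_eq split: if_splits)
qed

lemma w_irr: "w \<notin> \<rat>"
proof
  assume "w \<in> \<rat>"
  then have "2 * w - sg \<in> \<rat>" by (auto intro!: Rats_diff Rats_mult)
  moreover have "2 * w - sg = sq"
    using w_plus w_minus by (simp add: algebra_simps)
  ultimately show False using sq_irr by simp
qed

lemma w'_irr: "w' \<notin> \<rat>"
proof
  assume "w' \<in> \<rat>"
  then have "sg - w' \<in> \<rat>" by (auto intro!: Rats_diff)
  moreover have "sg - w' = w" using w_plus by simp
  ultimately show False using w_irr by simp
qed

lemma w_gt1: "w > 1"
proof (cases "D mod 4 = 1")
  case True
  then have "D \<ge> 5" using D1 by presburger
  then have "sqrt (real_of_int D) > 1" by simp
  then show ?thesis using True by (simp add: omega_def)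
next
  case False
  then show ?thesis using D1 by (simp add: omega_def)
qed

lemma w'_neg: "w' < 0"
proof -
  have "sqrt (real_of_int D) > 1" using D1 by simp
  then show ?thesis by (simp add: omega_conj_def)
qed

lemma rat_unique:
  assumes "a \<in> \<rat>" "b \<in> \<rat>" "c \<in> \<rat>" "d \<in> \<rat>" "a + b * w = c + d * w"
  shows "a = c \<and> b = d"
proof (cases "b = d")
  case True then show ?thesis using assms by simp
next
  case False
  have "(d - b) * w = a - c" using assms(5) by (simp add: algebra_simps)
  then have "w = (a - c) / (d - b)" using False by (simp add: field_simps)
  then have "w \<in> \<rat>" using assms by simp
  then show ?thesis using w_irr by simp
qed

lemma rat_unique':
  assumes "a \<in> \<rat>" "b \<in> \<rat>" "c \<in> \<rat>" "d \<in> \<rat>" "a + b * w' = c + d * w'"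
  shows "a = c \<and> b = d"
proof (cases "b = d")
  case True then show ?thesis using assms by simp
next
  case False
  have "(d - b) * w' = a - c" using assms(5) by (simp add: algebra_simps)
  then have "w' = (a - c) / (d - b)" using False by (simp add: field_simps)
  then have "w' \<in> \<rat>" using assms by simp
  then show ?thesis using w'_irr by simp
qed

lemma int_unique:
  fixes a b c d :: int
  assumes "a + b * w = c + d * w"
  shows "a = c \<and> b = d"
  using rat_unique[of a b c d] assms by simp

definition Kset :: "real set" where "Kset = {a + b * w | a b. a \<in> \<rat> \<and> b \<in> \<rat>}"

definition cnj :: "real \<Rightarrow> real" where
  "cnj t = (THE t'. \<exists>a b. a \<in> \<rat> \<and> b \<in> \<rat> \<and> t = a + b * w \<and> t' = a + b * w')"

lemma cnj_eq: assumes "a \<in> \<rat>" "b \<in> \<rat>" shows "cnj (a + b * w) = a + b * w'"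
  unfolding cnj_def
proof (rule the_equality)
  show "\<exists>aa ba. aa \<in> \<rat> \<and> ba \<in> \<rat> \<and> a + b * w = aa + ba * w \<and> a + b * w' = aa + ba * w'"
    using assms by blast
next
  fix t' assume "\<exists>aa ba. aa \<in> \<rat> \<and> ba \<in> \<rat> \<and> a + b * w = aa + ba * w \<and> t' = aa + ba * w'"
  then obtain aa ba where "aa \<in> \<rat>" "ba \<in> \<rat>" "a + b * w = aa + ba * w" "t' = aa + ba * w'" by blast
  then show "t' = a + b * w'" using rat_unique[of a b aa ba] assms by simp
qed

lemma cnj_eq': "a \<in> \<rat> \<Longrightarrow> b \<in> \<rat> \<Longrightarrow> t = a + b * w \<Longrightarrow> cnj t = a + b * w'"
  using cnj_eq by simp

lemma KsetE: assumes "t \<in> Kset" obtains a b where "a \<in> \<rat>" "b \<in> \<rat>" "t = a + b * w"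
  using assms unfolding Kset_def by blast

lemma KsetI: "a \<in> \<rat> \<Longrightarrow> b \<in> \<rat> \<Longrightarrow> a + b * w \<in> Kset"
  unfolding Kset_def by blast

lemma K_int [simp]: "real_of_int k \<in> Kset"
  using KsetI[of "of_int k" 0] by simp

lemma K_w [simp]: "w \<in> Kset"
  using KsetI[of 0 1] by simp

lemma K_add: "s \<in> Kset \<Longrightarrow> t \<in> Kset \<Longrightarrow> s + t \<in> Kset"
proof -
  assume "s \<in> Kset" "t \<in> Kset"
  then obtain a b c d where "a \<in> \<rat>" "b \<in> \<rat>" "c \<in> \<rat>" "d \<in> \<rat>" "s = a + b * w" "t = c + d * w"
    by (metis KsetE)
  then show ?thesis using KsetI[of "a + c" "b + d"] by (simp add: algebra_simps)
qed

lemma K_uminus: "s \<in> Kset \<Longrightarrow> - s \<in> Kset"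
proof -
  assume "s \<in> Kset"
  then obtain a b where "a \<in> \<rat>" "b \<in> \<rat>" "s = a + b * w" by (metis KsetE)
  then show ?thesis using KsetI[of "- a" "- b"] by (simp add: algebra_simps)
qed

lemma K_diff: "s \<in> Kset \<Longrightarrow> t \<in> Kset \<Longrightarrow> s - t \<in> Kset"
  using K_add K_uminus by (metis diff_conv_add_uminus)

lemma mult_expand: "(a + b * w) * (c + d * w) = (a * c - b * d * c0) + (a * d + b * c + b * d * sg) * w"
proof -
  have "(a + b * w) * (c + d * w) = a * c + (a * d + b * c) * w + b * d * (w * w)"
    by (simp add: algebra_simps)
  then show ?thesis by (simp add: w_sq algebra_simps)
qed

lemma mult_expand': "(a + b * w') * (c + d * w') = (a * c - b * d * c0) + (a * d + b * c + b * d * sg) * w'"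
proof -
  have "(a + b * w') * (c + d * w') = a * c + (a * d + b * c) * w' + b * d * (w' * w')"
    by (simp add: algebra_simps)
  then show ?thesis by (simp add: w'_sq algebra_simps)
qed

lemma K_mult: "s \<in> Kset \<Longrightarrow> t \<in> Kset \<Longrightarrow> s * t \<in> Kset"
proof -
  assume "s \<in> Kset" "t \<in> Kset"
  then obtain a b c d where "a \<in> \<rat>" "b \<in> \<rat>" "c \<in> \<rat>" "d \<in> \<rat>" "s = a + b * w" "t = c + d * w"
    by (metis KsetE)
  have "s * t = (a * c - b * d * c0) + (a * d + b * c + b * d * sg) * w"
    unfolding \<open>s = _\<close> \<open>t = _\<close> by (rule mult_expand)
  moreover have "a * c - b * d * c0 \<in> \<rat>" "a * d + b * c + b * d * sg \<in> \<rat>"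
    using \<open>a \<in> \<rat>\<close> \<open>b \<in> \<rat>\<close> \<open>c \<in> \<rat>\<close> \<open>d \<in> \<rat>\<close> by auto
  ultimately show ?thesis using KsetI by simp
qed

lemma cnj_add: "s \<in> Kset \<Longrightarrow> t \<in> Kset \<Longrightarrow> cnj (s + t) = cnj s + cnj t"
proof -
  assume "s \<in> Kset" "t \<in> Kset"
  then obtain a b c d where r: "a \<in> \<rat>" "b \<in> \<rat>" "c \<in> \<rat>" "d \<in> \<rat>" and st: "s = a + b * w" "t = c + d * w"
    by (metis KsetE)
  have e: "s + t = (a + c) + (b + d) * w" unfolding st by (simp add: algebra_simps)
  have 1: "cnj (s + t) = (a + c) + (b + d) * w'" by (rule cnj_eq'[OF _ _ e]) (use r in auto)
  have 2: "cnj s = a + b * w'" by (rule cnj_eq'[OF _ _ st(1)]) (use r in auto)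
  have 3: "cnj t = c + d * w'" by (rule cnj_eq'[OF _ _ st(2)]) (use r in auto)
  show ?thesis unfolding 1 2 3 by (simp add: algebra_simps)
qed

lemma cnj_uminus: "s \<in> Kset \<Longrightarrow> cnj (- s) = - cnj s"
proof -
  assume "s \<in> Kset"
  then obtain a b where r: "a \<in> \<rat>" "b \<in> \<rat>" and st: "s = a + b * w" by (metis KsetE)
  have e: "- s = (- a) + (- b) * w" unfolding st by simp
  have 1: "cnj (- s) = (- a) + (- b) * w'" by (rule cnj_eq'[OF _ _ e]) (use r in auto)
  have 2: "cnj s = a + b * w'" by (rule cnj_eq'[OF _ _ st]) (use r in auto)
  show ?thesis unfolding 1 2 by simp
qed

lemma cnj_diff: "s \<in> Kset \<Longrightarrow> t \<in> Kset \<Longrightarrow> cnj (s - t) = cnj s - cnj t"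
  by (metis K_uminus cnj_add cnj_uminus diff_conv_add_uminus)

lemma cnj_mult: "s \<in> Kset \<Longrightarrow> t \<in> Kset \<Longrightarrow> cnj (s * t) = cnj s * cnj t"
proof -
  assume "s \<in> Kset" "t \<in> Kset"
  then obtain a b c d where r: "a \<in> \<rat>" "b \<in> \<rat>" "c \<in> \<rat>" "d \<in> \<rat>" and st: "s = a + b * w" "t = c + d * w"
    by (metis KsetE)
  have e: "s * t = (a * c - b * d * c0) + (a * d + b * c + b * d * sg) * w"
    unfolding st by (rule mult_expand)
  have r2: "a * c - b * d * c0 \<in> \<rat>" "a * d + b * c + b * d * sg \<in> \<rat>" using r by auto
  have 1: "cnj (s * t) = (a * c - b * d * c0) + (a * d + b * c + b * d * sg) * w'"
    by (rule cnj_eq'[OF r2 e])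
  have 2: "cnj s = a + b * w'" by (rule cnj_eq'[OF _ _ st(1)]) (use r in auto)
  have 3: "cnj t = c + d * w'" by (rule cnj_eq'[OF _ _ st(2)]) (use r in auto)
  show ?thesis unfolding 1 2 3 by (rule mult_expand'[symmetric])
qed

lemma cnj_int [simp]: "cnj (real_of_int k) = real_of_int k"
  using cnj_eq[of "of_int k" 0] by simp

lemma cnj_w [simp]: "cnj w = w'"
  using cnj_eq[of 0 1] by simp

lemma cnj_nonzero: "s \<in> Kset \<Longrightarrow> s \<noteq> 0 \<Longrightarrow> cnj s \<noteq> 0"
proof -
  assume "s \<in> Kset" "s \<noteq> 0"
  then obtain a b where r: "a \<in> \<rat>" "b \<in> \<rat>" and st: "s = a + b * w" by (metis KsetE)
  have 2: "cnj s = a + b * w'" by (rule cnj_eq'[OF _ _ st]) (use r in auto)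
  show ?thesis
  proof
    assume "cnj s = 0"
    then have "a + b * w' = 0 + 0 * w'" using 2 by simp
    then have "a = 0 \<and> b = 0" using rat_unique'[of a b 0 0] r by simp
    then show False using st \<open>s \<noteq> 0\<close> by simp
  qed
qed

end

context qf begin

lemma K_inverse: "s \<in> Kset \<Longrightarrow> s \<noteq> 0 \<Longrightarrow> 1 / s \<in> Kset \<and> cnj (1 / s) = 1 / cnj s"
proof -
  assume sK: "s \<in> Kset" and s0: "s \<noteq> 0"
  then obtain a b where r: "a \<in> \<rat>" "b \<in> \<rat>" and st: "s = a + b * w" by (metis KsetE)
  have cs: "cnj s = a + b * w'" by (rule cnj_eq'[OF r st])
  have cs0: "cnj s \<noteq> 0" using cnj_nonzero sK s0 by simp
  define N where "N = (a + b * w) * (a + b * w')"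
  have "N = a * a + a * b * (w + w') + b * b * (w * w')" unfolding N_def by (simp add: algebra_simps)
  then have Nv: "N = a * a + a * b * sg + b * b * c0" using w_plus w_times by simp
  have Nrat: "N \<in> \<rat>" using Nv r by simp
  have h1: "a + b * w \<noteq> 0" using s0 st by simp
  have h2: "a + b * w' \<noteq> 0" using cs0 cs by simp
  have N0: "N \<noteq> 0" using h1 h2 mult_eq_0_iff unfolding N_def by blast
  have ww: "w' = sg - w" using w_plus by simp
  have cs2: "a + b * w' = (a + b * sg) + (- b) * w" unfolding ww by (simp add: algebra_simps)
  have Ns: "N = s * (a + b * w')" unfolding N_def st by simp
  have "1 / s = (a + b * w') / N" unfolding Ns using s0 h2 by simp
  also have "(a + b * w') / N = ((a + b * sg) + (- b) * w) / N" using cs2 by simp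
  also have "\<dots> = ((a + b * sg) / N) + (- b / N) * w" using N0 by (simp add: field_simps)
  finally have inv: "1 / s = ((a + b * sg) / N) + (- b / N) * w" .
  have r2: "(a + b * sg) / N \<in> \<rat>" "- b / N \<in> \<rat>" using r Nrat by auto
  have k: "1 / s \<in> Kset" unfolding inv by (rule KsetI[OF r2])
  have "cnj (1 / s) = ((a + b * sg) / N) + (- b / N) * w'" by (rule cnj_eq'[OF r2 inv])
  also have "\<dots> = (a + b * sg - b * w') / N" by (simp add: diff_divide_distrib)
  also have "a + b * sg - b * w' = s" unfolding st ww by (simp add: algebra_simps)
  also have "s / N = 1 / cnj s" unfolding Ns cs using s0 h2 by simp
  finally show ?thesis using k by simp
qed

lemma K_divide: "s \<in> Kset \<Longrightarrow> t \<in> Kset \<Longrightarrow> t \<noteq> 0 \<Longrightarrow> s / t \<in> Kset \<and> cnj (s / t) = cnj s / cnj t"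
proof -
  assume a: "s \<in> Kset" "t \<in> Kset" "t \<noteq> 0"
  have e: "s / t = s * (1 / t)" by simp
  have i: "1 / t \<in> Kset" "cnj (1 / t) = 1 / cnj t" using K_inverse[OF a(2,3)] by auto
  have "s / t \<in> Kset" unfolding e using K_mult a(1) i(1) by blast
  moreover have "cnj (s / t) = cnj s / cnj t" unfolding e using cnj_mult[OF a(1) i(1)] i(2) by simp
  ultimately show ?thesis by simp
qed


section \<open>Integers of K and lattices\<close>

lemma OK_mem: "x \<in> OK D \<longleftrightarrow> (\<exists>a b. x = of_int a + of_int b * w)"
  by (auto simp: OK_def)

lemma OKE: assumes "x \<in> OK D" obtains a b where "x = of_int a + of_int b * w"
  using assms OK_mem by blast

lemma OKI: "of_int a + of_int b * w \<in> OK D"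
  using OK_mem by blast

lemma OK_K: "x \<in> OK D \<Longrightarrow> x \<in> Kset"
  by (auto simp: OK_mem intro!: KsetI)

lemma OK_int [simp]: "real_of_int k \<in> OK D"
  using OKI[of k 0] by simp

lemma OK_1 [simp]: "1 \<in> OK D"
  using OK_int[of 1] by simp

lemma OK_0 [simp]: "0 \<in> OK D"
  using OK_int[of 0] by simp

lemma OK_w [simp]: "w \<in> OK D"
  using OKI[of 0 1] by simp

lemma OK_add: "x \<in> OK D \<Longrightarrow> y \<in> OK D \<Longrightarrow> x + y \<in> OK D"
proof -
  assume "x \<in> OK D" "y \<in> OK D"
  then obtain a b c d where "x = of_int a + of_int b * w" "y = of_int c + of_int d * w" by (metis OKE)
  then have "x + y = of_int (a + c) + of_int (b + d) * w" by (simp add: algebra_simps)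
  then show ?thesis by (simp only: OKI)
qed

lemma OK_uminus: "x \<in> OK D \<Longrightarrow> - x \<in> OK D"
proof -
  assume "x \<in> OK D"
  then obtain a b where "x = of_int a + of_int b * w" by (metis OKE)
  then have "- x = of_int (- a) + of_int (- b) * w" by (simp add: algebra_simps)
  then show ?thesis by (simp only: OKI)
qed

lemma OK_diff: "x \<in> OK D \<Longrightarrow> y \<in> OK D \<Longrightarrow> x - y \<in> OK D"
  using OK_add OK_uminus by (metis diff_conv_add_uminus)

lemma int_mult_expand:
  "(of_int a + of_int b * w) * (of_int c + of_int d * w) =
     of_int (a * c - b * d * c0) + of_int (a * d + b * c + b * d * sg) * w"
  using mult_expand[of "of_int a" "of_int b" "of_int c" "of_int d"] by simp

lemma OK_mult: "x \<in> OK D \<Longrightarrow> y \<in> OK D \<Longrightarrow> x * y \<in> OK D"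
proof -
  assume "x \<in> OK D" "y \<in> OK D"
  then obtain a b c d where "x = of_int a + of_int b * w" "y = of_int c + of_int d * w" by (metis OKE)
  then show ?thesis by (simp only: int_mult_expand OKI)
qed

lemma cnj_OK: "cnj (of_int a + of_int b * w) = of_int a + of_int b * w'"
  using cnj_eq[of "of_int a" "of_int b"] by simp

lemma cnj_OK_mem: "x \<in> OK D \<Longrightarrow> cnj x \<in> OK D"
proof -
  assume "x \<in> OK D"
  then obtain a b where x: "x = of_int a + of_int b * w" by (metis OKE)
  have ww: "w' = sg - w" using w_plus by simp
  have "cnj x = of_int (a + b * sg) + of_int (- b) * w" unfolding x cnj_OK ww by (simp add: algebra_simps)
  then show ?thesis by (simp only: OKI)
qed

definition Nm :: "int \<Rightarrow> int" where "Nm r = r * r + sg * r + c0"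

lemma Nm_eq: "(of_int r + w) * (of_int r + w') = of_int (Nm r)"
proof -
  have "(of_int r + w) * (of_int r + w') = of_int r * of_int r + of_int r * (w + w') + w * w'"
    by (simp add: algebra_simps)
  then show ?thesis using w_plus w_times by (simp add: Nm_def)
qed

lemma Nm_nonzero: "Nm r \<noteq> 0"
proof
  assume "Nm r = 0"
  then have "(of_int r + w) * (of_int r + w') = 0" using Nm_eq by simp
  moreover have "of_int r + w \<noteq> 0"
  proof
    assume "of_int r + w = 0" then have "w = of_int (- r)" by simp
    then show False using w_irr by (metis Rats_of_int)
  qed
  moreover have "of_int r + w' \<noteq> 0"
  proof
    assume "of_int r + w' = 0" then have "w' = of_int (- r)" by simp
    then show False using w'_irr by (metis Rats_of_int)
  qed
  ultimately show False by simp
qed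

definition Lat :: "int \<Rightarrow> int \<Rightarrow> real set" where
  "Lat q r = {of_int (i * q) + of_int j * (of_int r + w) | i j. True}"

lemma Lat_I: "of_int (i * q) + of_int j * (of_int r + w) \<in> Lat q r"
  unfolding Lat_def by blast

lemma mem_Lat:
  assumes "q \<noteq> 0"
  shows "of_int a + of_int b * w \<in> Lat q r \<longleftrightarrow> q dvd a - b * r"
proof
  assume "of_int a + of_int b * w \<in> Lat q r"
  then obtain i j where "of_int a + of_int b * w = of_int (i * q) + of_int j * (of_int r + w)"
    unfolding Lat_def by blast
  then have "of_int a + of_int b * w = of_int (i * q + j * r) + of_int j * w" by (simp add: algebra_simps)
  then have "a = i * q + j * r \<and> b = j" using int_unique by blast
  then show "q dvd a - b * r" by simp
next
  assume "q dvd a - b * r"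
  then obtain k where k: "a - b * r = q * k" by blast
  have "of_int a + of_int b * w = of_int (k * q) + of_int b * (of_int r + w)"
  proof -
    have "a = k * q + b * r" using k by (simp add: algebra_simps)
    then show ?thesis by (simp add: algebra_simps)
  qed
  then show "of_int a + of_int b * w \<in> Lat q r" using Lat_I by simp
qed

lemma Lat_OK: "Lat q r \<subseteq> OK D"
proof
  fix x assume "x \<in> Lat q r"
  then obtain i j where "x = of_int (i * q) + of_int j * (of_int r + w)" unfolding Lat_def by blast
  then have "x = of_int (i * q + j * r) + of_int j * w" by (simp add: algebra_simps)
  then show "x \<in> OK D" by (simp only: OKI)
qed

lemma Lat_mem_iff:
  assumes "q \<noteq> 0" "x \<in> OK D"
  obtains a b where "x = of_int a + of_int b * w" "x \<in> Lat q r \<longleftrightarrow> q dvd a - b * r"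
  using assms mem_Lat by (metis OKE)

lemma Lat_mod: assumes "q \<noteq> 0" "q dvd r - r'" shows "Lat q r = Lat q r'"
proof (rule set_eqI)
  fix x
  show "x \<in> Lat q r \<longleftrightarrow> x \<in> Lat q r'"
  proof (cases "x \<in> OK D")
    case True
    then obtain a b where x: "x = of_int a + of_int b * w" by (metis OKE)
    have "q dvd a - b * r \<longleftrightarrow> q dvd a - b * r'"
    proof -
      obtain k where k: "r - r' = q * k" using assms(2) by blast
      have e: "a - b * r = (a - b * r') + q * (- b * k)"
        using k by (simp add: algebra_simps)
      show ?thesis unfolding e by (rule dvd_add_left_iff) simp
    qed
    then show ?thesis unfolding x using mem_Lat[OF assms(1)] by simp
  next
    case False
    then show ?thesis using Lat_OK by blast
  qed
qed

lemma Lat_eq_dvd: assumes "q \<noteq> 0" "Lat q r = Lat q r'" shows "q dvd r - r'"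
proof -
  have m: "of_int r + of_int 1 * w \<in> Lat q r" by (simp only: mem_Lat[OF assms(1)]) simp
  have "of_int r + of_int 1 * w \<in> Lat q r'" using m unfolding assms(2) .
  then have "q dvd r - 1 * r'" by (simp only: mem_Lat[OF assms(1)])
  then show ?thesis by simp
qed

lemma Lat_1: "Lat 1 r = OK D"
proof
  show "Lat 1 r \<subseteq> OK D" by (rule Lat_OK)
  show "OK D \<subseteq> Lat 1 r"
  proof
    fix x assume "x \<in> OK D"
    then obtain a b where "x = of_int a + of_int b * w" by (metis OKE)
    then show "x \<in> Lat 1 r" using mem_Lat[of 1] by simp
  qed
qed

lemma Lat_ideal:
  assumes q: "q > 0" and dv: "q dvd Nm r"
  shows "nonzero_ideal D (Lat q r)"
  unfolding nonzero_ideal_def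
proof (intro conjI ballI)
  show "Lat q r \<subseteq> OK D" by (rule Lat_OK)
  show "0 \<in> Lat q r" using Lat_I[of 0 q 0 r] by simp
  have "of_int q \<in> Lat q r" using Lat_I[of 1 q 0 r] by simp
  then show "Lat q r \<noteq> {0}" using q by auto
next
  fix x y assume "x \<in> Lat q r" "y \<in> Lat q r"
  then obtain i j i' j' where "x = of_int (i * q) + of_int j * (of_int r + w)"
      "y = of_int (i' * q) + of_int j' * (of_int r + w)" unfolding Lat_def by blast
  then have "x + y = of_int ((i + i') * q) + of_int (j + j') * (of_int r + w)" by (simp add: algebra_simps)
  then show "x + y \<in> Lat q r" by (simp only: Lat_I)
next
  fix s x assume s: "s \<in> OK D" and x: "x \<in> Lat q r"
  have q0: "q \<noteq> 0" using q by simp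
  obtain c d where sx: "s = of_int c + of_int d * w" using s by (metis OKE)
  obtain a b where xx: "x = of_int a + of_int b * w" using x Lat_OK by (metis OKE subsetD)
  have "q dvd a - b * r" using x mem_Lat[OF q0] xx by simp
  then obtain k where k0: "a - b * r = q * k" by blast
  then have k: "a = b * r + q * k" by simp
  obtain m where m: "Nm r = q * m" using dv by blast
  have "(c * a - d * b * c0) - (c * b + d * a + d * b * sg) * r = q * (k * (c - d * r)) - b * d * Nm r"
    unfolding k Nm_def by (simp add: algebra_simps)
  also have "\<dots> = q * (k * (c - d * r) - b * d * m)" unfolding m by (simp add: algebra_simps)
  finally have "q dvd (c * a - d * b * c0) - (c * b + d * a + d * b * sg) * r" by simp
  moreover have "s * x = of_int (c * a - d * b * c0) + of_int (c * b + d * a + d * b * sg) * w"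
    unfolding sx xx by (rule int_mult_expand)
  ultimately show "s * x \<in> Lat q r" by (simp only: mem_Lat[OF q0])
qed

lemma Lat_primitive:
  assumes q: "q > 0"
  shows "primitive D (Lat q r)"
  unfolding primitive_def
proof (intro allI impI notI)
  fix n :: int assume n: "n > 1" and sub: "Lat q r \<subseteq> {of_int n * x |x. x \<in> OK D}"
  have "of_int r + w \<in> Lat q r" using Lat_I[of 0 q 1 r] by simp
  then obtain y where y: "y \<in> OK D" "of_int r + w = of_int n * y" using sub by blast
  obtain c d where yy: "y = of_int c + of_int d * w" using y(1) by (metis OKE)
  have "of_int r + of_int 1 * w = of_int (n * c) + of_int (n * d) * w" using y(2) unfolding yy
    by (simp add: algebra_simps)
  then have "1 = n * d" using int_unique by blast
  then have "n * d = 1" by simp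
  then show False using n zmult_eq_1_iff[of n d] by simp
qed

end

context qf begin

lemma diff_form: "(of_int c + of_int d * w) - (of_int a + of_int b * w) = of_int (c - a) + of_int (d - b) * w"
  by (simp add: algebra_simps)

lemma ideal_norm_Lat:
  assumes q: "q > 0"
  shows "ideal_norm D (Lat q r) = nat q"
proof -
  have q0: "q \<noteq> 0" using q by simp
  define f where "f = (\<lambda>x. {y \<in> OK D. y - x \<in> Lat q r})"
  have c1: "f (of_int a + of_int b * w) = f (of_int ((a - b * r) mod q))" for a b
  proof -
    have "y - (of_int a + of_int b * w) \<in> Lat q r \<longleftrightarrow> y - of_int ((a - b * r) mod q) \<in> Lat q r"
      if y: "y \<in> OK D" for y
    proof -
      obtain c d where yy: "y = of_int c + of_int d * w" using y by (metis OKE)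
      have e1: "y - (of_int a + of_int b * w) = of_int (c - a) + of_int (d - b) * w"
        unfolding yy by (rule diff_form)
      have e2: "y - of_int ((a - b * r) mod q) = of_int (c - (a - b * r) mod q) + of_int (d - 0) * w"
        unfolding yy by simp
      have "q dvd (c - a) - (d - b) * r \<longleftrightarrow> q dvd (c - (a - b * r) mod q) - (d - 0) * r"
      proof -
        have e1: "(c - a) - (d - b) * r = (c - d * r) - (a - b * r)" by (simp add: algebra_simps)
        have e2: "(c - (a - b * r) mod q) - (d - 0) * r = (c - d * r) - (a - b * r) mod q"
          by (simp add: algebra_simps)
        show ?thesis by (simp only: e1 e2 dvd_eq_mod_eq_0 mod_diff_right_eq)
      qed
      then show ?thesis unfolding e1 e2 mem_Lat[OF q0] .
    qed
    then show ?thesis unfolding f_def by blast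
  qed
  have mem_self: "of_int k \<in> f (of_int k)" for k
    unfolding f_def using Lat_I[of 0 q 0 r] by simp
  have inj: "inj_on (\<lambda>k. f (of_int k)) {0..<q}"
  proof (rule inj_onI)
    fix k k' assume k: "k \<in> {0..<q}" "k' \<in> {0..<q}" and eq: "f (of_int k) = f (of_int k')"
    have "of_int k' \<in> f (of_int k)" using mem_self eq by simp
    then have "of_int (k' - k) + of_int 0 * w \<in> Lat q r" unfolding f_def by simp
    then have "q dvd (k' - k) - 0 * r" by (simp only: mem_Lat[OF q0])
    then have "q dvd k' - k" by simp
    show "k = k'"
    proof (rule ccontr)
      assume "k \<noteq> k'"
      then have "\<bar>q\<bar> \<le> \<bar>k' - k\<bar>" using dvd_imp_le_int \<open>q dvd k' - k\<close> by simp
      then show False using k by auto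
    qed
  qed
  have img: "f ` OK D = (\<lambda>k. f (of_int k)) ` {0..<q}"
  proof
    show "f ` OK D \<subseteq> (\<lambda>k. f (of_int k)) ` {0..<q}"
    proof
      fix z assume "z \<in> f ` OK D"
      then obtain x where x: "x \<in> OK D" "z = f x" by blast
      obtain a b where xx: "x = of_int a + of_int b * w" using x(1) by (metis OKE)
      have "(a - b * r) mod q \<in> {0..<q}" using q by simp
      moreover have "z = f (of_int ((a - b * r) mod q))" using x(2) xx c1 by simp
      ultimately show "z \<in> (\<lambda>k. f (of_int k)) ` {0..<q}" by blast
    qed
    show "(\<lambda>k. f (of_int k)) ` {0..<q} \<subseteq> f ` OK D" by auto
  qed
  have "ideal_norm D (Lat q r) = card (f ` OK D)" unfolding ideal_norm_def f_def by simp
  also have "\<dots> = card {0..<q}" unfolding img using inj by (rule card_image)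
  also have "\<dots> = nat q" by simp
  finally show ?thesis .
qed

lemma ideal_closed:
  assumes I: "nonzero_ideal D I"
  shows "I \<subseteq> OK D" "0 \<in> I" "x \<in> I \<Longrightarrow> y \<in> I \<Longrightarrow> x + y \<in> I"
    "s \<in> OK D \<Longrightarrow> x \<in> I \<Longrightarrow> s * x \<in> I"
    "x \<in> I \<Longrightarrow> of_int k * x \<in> I"
    "x \<in> I \<Longrightarrow> - x \<in> I"
    "x \<in> I \<Longrightarrow> y \<in> I \<Longrightarrow> x - y \<in> I"
proof -
  show "I \<subseteq> OK D" "0 \<in> I" using I unfolding nonzero_ideal_def by auto
  show "x \<in> I \<Longrightarrow> y \<in> I \<Longrightarrow> x + y \<in> I" using I unfolding nonzero_ideal_def by auto
  show sm: "s \<in> OK D \<Longrightarrow> x \<in> I \<Longrightarrow> s * x \<in> I" for s x using I unfolding nonzero_ideal_def by auto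
  show "x \<in> I \<Longrightarrow> of_int k * x \<in> I" using sm[of "of_int k" x] by simp
  show neg: "x \<in> I \<Longrightarrow> - x \<in> I" for x using sm[OF OK_int[of "-1"], of x] by simp
  show "x \<in> I \<Longrightarrow> y \<in> I \<Longrightarrow> x - y \<in> I"
  proof -
    assume "x \<in> I" "y \<in> I"
    then have "x + - y \<in> I" using neg[of y] I unfolding nonzero_ideal_def by blast
    then show ?thesis by simp
  qed
qed

lemma classify:
  assumes I: "nonzero_ideal D I" and P: "primitive D I"
  shows "\<exists>q r. q > 0 \<and> q dvd Nm r \<and> I = Lat q r"
proof -
  note cl = ideal_closed[OF I]
  obtain \<alpha> where al: "\<alpha> \<in> I" "\<alpha> \<noteq> 0"
    using I cl(2) unfolding nonzero_ideal_def by blast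
  have alO: "\<alpha> \<in> OK D" using al cl(1) by blast
  obtain a b where ab: "\<alpha> = of_int a + of_int b * w" using alO by (metis OKE)
  have "cnj \<alpha> \<in> OK D" using cnj_OK_mem alO by simp
  then have m: "cnj \<alpha> * \<alpha> \<in> I" using cl(4) al(1) by simp
  define N where "N = a * a + a * b * sg + b * b * c0"
  have e: "cnj \<alpha> * \<alpha> = of_int N"
  proof -
    have "cnj \<alpha> * \<alpha> = (of_int a + of_int b * w) * (of_int a + of_int b * w')"
      unfolding ab cnj_OK by simp
    also have "\<dots> = of_int a * of_int a + of_int a * of_int b * (w + w') + of_int b * of_int b * (w * w')"
      by (simp add: algebra_simps)
    finally show ?thesis using w_plus w_times by (simp add: N_def)
  qed
  have nz: "cnj \<alpha> * \<alpha> \<noteq> 0" using al(2) cnj_nonzero[OF OK_K[OF alO]] al(2) by simp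
  have h1: "of_int N \<in> I" using m unfolding e .
  have h2: "(of_int N :: real) \<noteq> 0" using nz unfolding e .
  have "N \<noteq> 0"
  proof
    assume "N = 0" then show False using h2 by simp
  qed
  then have "N \<noteq> 0 \<and> of_int N \<in> I" using h1 by simp
  then obtain n0 where n0: "n0 \<noteq> 0" "of_int n0 \<in> I" by blast
  have "of_int \<bar>n0\<bar> \<in> I"
  proof (cases "n0 \<ge> 0")
    case True then show ?thesis using n0 by simp
  next
    case False then show ?thesis using n0 cl(6)[of "of_int n0"] by simp
  qed
  then have exq: "\<exists>k::nat. k > 0 \<and> of_nat k \<in> I" using n0 by (intro exI[of _ "nat \<bar>n0\<bar>"]) simp
  define qn where "qn = (LEAST k::nat. k > 0 \<and> of_nat k \<in> I)"
  have qnI: "qn > 0 \<and> of_nat qn \<in> I"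
    using LeastI_ex[OF exq] unfolding qn_def by blast
  define q where "q = int qn"
  have qI: "q > 0 \<and> of_int q \<in> I" using qnI q_def by simp
  have qmin: "\<not> (k > 0 \<and> of_int k \<in> I)" if "k < q" for k
  proof
    assume h: "k > 0 \<and> of_int k \<in> I"
    then have "nat k > 0 \<and> of_nat (nat k) \<in> I" by simp
    then have "qn \<le> nat k" unfolding qn_def by (rule Least_le)
    then have "int qn \<le> int (nat k)" by (simp only: of_nat_le_iff)
    then show False using that h q_def by simp
  qed
  have intdvd: "q dvd k" if k: "of_int k \<in> I" for k
  proof -
    have "k mod q = k - (k div q) * q" using minus_div_mult_eq_mod[of k q] by simp
    then have "of_int (k mod q) = (of_int k - of_int (k div q) * of_int q :: real)" by simp
    then have "of_int (k mod q) \<in> I" using cl(7)[OF k cl(5)[OF conjunct2[OF qI]]] by simp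
    moreover have "k mod q < q" "k mod q \<ge> 0" using qI by auto
    ultimately have "k mod q = 0" using qmin by fastforce
    then show ?thesis by presburger
  qed
  have "of_int q * w \<in> I" using cl(4)[OF OK_w conjunct2[OF qI]] by (simp add: mult.commute)
  then have "of_int 0 + of_nat qn * w \<in> I" using q_def by simp
  then have exBn: "\<exists>b::nat. b > 0 \<and> (\<exists>a. of_int a + of_nat b * w \<in> I)"
    using qnI by blast
  define tn where "tn = (LEAST b::nat. b > 0 \<and> (\<exists>a. of_int a + of_nat b * w \<in> I))"
  have tnI: "tn > 0 \<and> (\<exists>a. of_int a + of_nat tn * w \<in> I)"
    using LeastI_ex[OF exBn] unfolding tn_def by blast
  define t where "t = int tn"
  have tI: "t > 0 \<and> (\<exists>a. of_int a + of_int t * w \<in> I)" using tnI t_def by simp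
  have tmin: "\<not> (b > 0 \<and> (\<exists>a. of_int a + of_int b * w \<in> I))" if "b < t" for b
  proof
    assume h: "b > 0 \<and> (\<exists>a. of_int a + of_int b * w \<in> I)"
    then have "nat b > 0 \<and> (\<exists>a. of_int a + of_nat (nat b) * w \<in> I)" by simp
    then have "tn \<le> nat b" unfolding tn_def by (rule Least_le)
    then have "int tn \<le> int (nat b)" by (simp only: of_nat_le_iff)
    then show False using that h t_def by simp
  qed
  obtain aT where aT: "of_int aT + of_int t * w \<in> I" using tI by blast
  have tdvd: "t dvd b" if ab: "of_int a + of_int b * w \<in> I" for a b
  proof -
    have e: "of_int a + of_int b * w - of_int (b div t) * (of_int aT + of_int t * w) =
          of_int (a - (b div t) * aT) + of_int (b mod t) * w"
    proof -
      have "b = (b div t) * t + b mod t" by simp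
      then have "of_int b = of_int (b div t) * of_int t + (of_int (b mod t) :: real)"
        by (metis of_int_add of_int_mult)
      then show ?thesis by (simp add: algebra_simps)
    qed
    have m: "of_int a + of_int b * w - of_int (b div t) * (of_int aT + of_int t * w) \<in> I"
      using cl(7)[OF ab cl(5)[OF aT]] by simp
    have "of_int (a - (b div t) * aT) + of_int (b mod t) * w \<in> I" using m unfolding e .
    moreover have "b mod t < t" "b mod t \<ge> 0" using tI by auto
    ultimately have "b mod t = 0" using tmin by fastforce
    then show ?thesis by presburger
  qed
  have tdvda: "t dvd a" if ab: "of_int a + of_int b * w \<in> I" for a b
  proof -
    have "(of_int 0 + of_int 1 * w) * (of_int a + of_int b * w) \<in> I"
      using cl(4)[OF OK_w ab] by simp
    then have "of_int (0 * a - 1 * b * c0) + of_int (0 * b + 1 * a + 1 * b * sg) * w \<in> I"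
      by (simp only: int_mult_expand)
    then have "t dvd 0 * b + 1 * a + 1 * b * sg" by (rule tdvd)
    moreover have "t dvd b" using ab by (rule tdvd)
    ultimately have "t dvd (0 * b + 1 * a + 1 * b * sg) - b * sg" using dvd_diff dvd_mult2 by blast
    then show ?thesis by simp
  qed
  have t1: "t = 1"
  proof (rule ccontr)
    assume "t \<noteq> 1"
    then have "t > 1" using tI by simp
    moreover have "I \<subseteq> {of_int t * x | x. x \<in> OK D}"
    proof
      fix x assume x: "x \<in> I"
      obtain a b where ab: "x = of_int a + of_int b * w" using x cl(1) by (metis OKE subsetD)
      obtain a' where a': "a = t * a'" using tdvda x ab by blast
      obtain b' where b': "b = t * b'" using tdvd x ab by blast
      have "x = of_int t * (of_int a' + of_int b' * w)" unfolding ab a' b' by (simp add: algebra_simps)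
      then show "x \<in> {of_int t * x | x. x \<in> OK D}" using OKI by blast
    qed
    ultimately show False using P unfolding primitive_def by blast
  qed
  define r0 where "r0 = aT"
  have r0I: "of_int r0 + w \<in> I" using aT t1 r0_def by simp
  have eq: "I = Lat q r0"
  proof
    show "I \<subseteq> Lat q r0"
    proof
      fix x assume x: "x \<in> I"
      obtain a b where ab: "x = of_int a + of_int b * w" using x cl(1) by (metis OKE subsetD)
      have "x - of_int b * (of_int r0 + w) \<in> I" using cl(7)[OF x cl(5)[OF r0I]] by simp
      moreover have "x - of_int b * (of_int r0 + w) = of_int (a - b * r0)" unfolding ab by (simp add: algebra_simps)
      ultimately have "q dvd a - b * r0" using intdvd by simp
      then show "x \<in> Lat q r0" unfolding ab using mem_Lat qI by simp
    qed
    show "Lat q r0 \<subseteq> I"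
    proof
      fix x assume "x \<in> Lat q r0"
      then obtain i j where "x = of_int (i * q) + of_int j * (of_int r0 + w)" unfolding Lat_def by blast
      then have "x = of_int i * of_int q + of_int j * (of_int r0 + w)" by simp
      then show "x \<in> I" using cl(3)[OF cl(5)[OF conjunct2[OF qI]] cl(5)[OF r0I]] by simp
    qed
  qed
  have h1: "of_int (r0 + sg) + of_int (- 1) * w \<in> OK D" by (rule OKI)
  have h2: "of_int (r0 + sg) + of_int (- 1) * w = of_int r0 + w'"
  proof -
    have ww: "w' = sg - w" using w_plus by simp
    show ?thesis unfolding ww by (simp add: algebra_simps)
  qed
  have "of_int r0 + w' \<in> OK D" using h1 unfolding h2 .
  then have "(of_int r0 + w') * (of_int r0 + w) \<in> I" using cl(4)[OF _ r0I] by blast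
  then have "of_int (Nm r0) \<in> I" using Nm_eq by (simp add: mult.commute)
  then have "q dvd Nm r0" by (rule intdvd)
  then show ?thesis using qI eq by blast
qed

lemma PP_sub: "PP D X \<subseteq> (\<lambda>p. Lat (fst p) (snd p)) ` ({1..\<lceil>X\<rceil>} \<times> {0..\<lceil>X\<rceil>})"
proof
  fix I assume "I \<in> PP D X"
  then have I: "nonzero_ideal D I" "primitive D I" "real (ideal_norm D I) < X" unfolding PP_def by auto
  obtain q r where qr: "q > 0" "q dvd Nm r" "I = Lat q r" using classify[OF I(1,2)] by blast
  have "real (nat q) < X" using I(3) qr ideal_norm_Lat by simp
  then have "of_int q < X" using qr by simp
  then have "of_int q \<le> (of_int \<lceil>X\<rceil> :: real)" using le_of_int_ceiling[of X] by linarith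
  then have qX: "q \<le> \<lceil>X\<rceil>" by simp
  have "Lat q r = Lat q (r mod q)" using Lat_mod[of q r "r mod q"] qr by (simp add: mod_eq_dvd_iff [symmetric])
  moreover have "r mod q \<ge> 0" "r mod q < q" using qr by auto
  moreover have "r mod q \<le> \<lceil>X\<rceil>" using qX calculation(3) by simp
  ultimately show "I \<in> (\<lambda>p. Lat (fst p) (snd p)) ` ({1..\<lceil>X\<rceil>} \<times> {0..\<lceil>X\<rceil>})"
    using qr qX by (intro image_eqI[of _ _ "(q, r mod q)"]) auto
qed

lemma PP_finite: "finite (PP D X)"
  using PP_sub by (rule finite_subset) simp

lemma PN_sub: "PN D X \<subseteq> PP D X"
  unfolding PN_def PP_def by blast

lemma PN_finite: "finite (PN D X)"
  using PN_sub PP_finite by (rule finite_subset)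

end

context qf begin

definition stepf :: "int \<times> int \<Rightarrow> int \<times> int" where
  "stepf p = (let r = fst p; Q = snd p; a = \<lfloor>(of_int r + w) / of_int Q\<rfloor>; r' = a * Q - r - sg
              in (r', - (Nm r' div Q)))"

primrec st :: "nat \<Rightarrow> int \<times> int" where
  "st 0 = (0, 1)"
| "st (Suc n) = stepf (st n)"

definition rr :: "nat \<Rightarrow> int" where "rr n = fst (st n)"
definition QQ :: "nat \<Rightarrow> int" where "QQ n = snd (st n)"
definition xx :: "nat \<Rightarrow> real" where "xx n = (of_int (rr n) + w) / of_int (QQ n)"
definition xc :: "nat \<Rightarrow> real" where "xc n = (of_int (rr n) + w') / of_int (QQ n)"
definition uu :: "nat \<Rightarrow> int" where "uu n = \<lfloor>xx n\<rfloor>"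

lemma st_eq: "st n = (rr n, QQ n)" by (simp add: rr_def QQ_def)

lemma rr0: "rr 0 = 0" and QQ0: "QQ 0 = 1" by (simp_all add: rr_def QQ_def)

lemma rr_Suc: "rr (Suc n) = uu n * QQ n - rr n - sg"
  by (simp add: rr_def QQ_def stepf_def Let_def uu_def xx_def)

lemma QQ_Suc: "QQ (Suc n) = - (Nm (rr (Suc n)) div QQ n)"
  by (simp add: rr_def QQ_def stepf_def Let_def uu_def xx_def)

lemma Nm_shift: "Nm (a * Q - r - sg) = Nm r + a * Q * (a * Q - 2 * r - sg)"
  by (simp add: Nm_def algebra_simps)

lemma QQ_inv: "QQ n \<noteq> 0 \<and> QQ n dvd Nm (rr n)"
proof (induction n)
  case 0 then show ?case by (simp add: QQ0)
next
  case (Suc n)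
  have "QQ n dvd Nm (rr (Suc n))"
  proof -
    have "Nm (rr (Suc n)) = Nm (rr n) + uu n * QQ n * (uu n * QQ n - 2 * rr n - sg)"
      unfolding rr_Suc by (rule Nm_shift)
    then show ?thesis using Suc by simp
  qed
  then obtain m where m: "Nm (rr (Suc n)) = QQ n * m" by blast
  have q: "QQ (Suc n) = - m" unfolding QQ_Suc m using Suc by simp
  have "m \<noteq> 0" using m Nm_nonzero Suc by auto
  then show ?case using q m by simp
qed

lemma QQ_nz: "QQ n \<noteq> 0" using QQ_inv by simp

lemma QQ_mult: "QQ n * QQ (Suc n) = - Nm (rr (Suc n))"
proof -
  have "QQ n dvd Nm (rr (Suc n))"
  proof -
    have "Nm (rr (Suc n)) = Nm (rr n) + uu n * QQ n * (uu n * QQ n - 2 * rr n - sg)"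
      unfolding rr_Suc by (rule Nm_shift)
    then show ?thesis using QQ_inv[of n] by simp
  qed
  then obtain m where m: "Nm (rr (Suc n)) = QQ n * m" by blast
  have "QQ (Suc n) = - m" unfolding QQ_Suc m using QQ_nz[of n] by simp
  then show ?thesis using m by simp
qed

lemma w'_from_w: "w - of_int sg = - w'" using w_plus by simp

lemma step_id:
  fixes r Q a r' Q' :: int
  assumes Q: "Q \<noteq> 0" and QQ': "Q * Q' = - Nm r'" and r': "r' = a * Q - r - sg"
  shows "1 / ((of_int r + w) / of_int Q - of_int a) = (of_int r' + w) / of_int Q'"
    and "1 / ((of_int r + w') / of_int Q - of_int a) = (of_int r' + w') / of_int Q'"
proof -
  have Q'0: "Q' \<noteq> 0" using QQ' Nm_nonzero by auto
  have rr': "(of_int r :: real) - of_int a * of_int Q = - of_int r' - of_int sg" using r' by simp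
  have n1: "of_int r' + w \<noteq> 0"
  proof
    assume "of_int r' + w = 0" then have "w = of_int (- r')" by simp
    then show False using w_irr by (metis Rats_of_int)
  qed
  have n2: "of_int r' + w' \<noteq> 0"
  proof
    assume "of_int r' + w' = 0" then have "w' = of_int (- r')" by simp
    then show False using w'_irr by (metis Rats_of_int)
  qed
  have prod: "of_int Q * of_int Q' = - ((of_int r' + w) * (of_int r' + w'))"
    using QQ' Nm_eq[of r'] by (metis of_int_minus of_int_mult)
  have e1: "(of_int r + w) / of_int Q - of_int a = - (of_int r' + w') / of_int Q"
  proof -
    have "(of_int r + w) / of_int Q - of_int a = (of_int r - of_int a * of_int Q + w) / of_int Q"
      using Q by (simp add: field_simps)
    also have "\<dots> = (- of_int r' + (w - of_int sg)) / of_int Q" unfolding rr' by (simp add: algebra_simps)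
    also have "\<dots> = - (of_int r' + w') / of_int Q" unfolding w'_from_w by (simp add: algebra_simps)
    finally show ?thesis .
  qed
  have e2: "(of_int r + w') / of_int Q - of_int a = - (of_int r' + w) / of_int Q"
  proof -
    have "(of_int r + w') / of_int Q - of_int a = (of_int r - of_int a * of_int Q + w') / of_int Q"
      using Q by (simp add: field_simps)
    also have "\<dots> = (- of_int r' + (w' - of_int sg)) / of_int Q" unfolding rr' by (simp add: algebra_simps)
    also have "w' - of_int sg = - w" using w_plus by simp
    also have "(- of_int r' + - w) / of_int Q = - (of_int r' + w) / of_int Q" by (simp add: algebra_simps)
    finally show ?thesis .
  qed
  show "1 / ((of_int r + w) / of_int Q - of_int a) = (of_int r' + w) / of_int Q'"
    unfolding e1 using Q Q'0 n1 n2 prod by (simp add: field_simps)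
  show "1 / ((of_int r + w') / of_int Q - of_int a) = (of_int r' + w') / of_int Q'"
    unfolding e2 using Q Q'0 n1 n2 prod by (simp add: field_simps)
qed

lemma xx_step: "1 / (xx n - of_int (uu n)) = xx (Suc n)"
  unfolding xx_def using step_id(1)[OF QQ_nz[of n] QQ_mult[of n] rr_Suc[of n]] by simp

lemma xc_step: "1 / (xc n - of_int (uu n)) = xc (Suc n)"
  unfolding xc_def using step_id(2)[OF QQ_nz[of n] QQ_mult[of n] rr_Suc[of n]] by simp

lemma xx_irr: "xx n \<notin> \<rat>"
proof
  assume h: "xx n \<in> \<rat>"
  have "w = xx n * of_int (QQ n) - of_int (rr n)" using QQ_nz[of n] unfolding xx_def by simp
  then have "w \<in> \<rat>" using h by simp
  then show False using w_irr by simp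
qed

lemma xx_frac: "xx n - of_int (uu n) > 0"
proof -
  have "of_int (uu n) \<le> xx n" unfolding uu_def by simp
  moreover have "of_int (uu n) \<noteq> xx n" using xx_irr[of n] by (metis Rats_of_int)
  ultimately show ?thesis by simp
qed

lemma cf_rem_xx: "cf_rem w n = xx n"
proof (induction n)
  case 0 then show ?case by (simp add: xx_def rr0 QQ0)
next
  case (Suc n)
  then show ?case using xx_step[of n] by (simp add: uu_def)
qed

lemma cf_uu: "cf w n = uu n"
  unfolding cf_def cf_rem_xx uu_def ..

lemma xx_gt1_xc_neg: "xx n > 1 \<and> xc n < 0"
proof (induction n)
  case 0 then show ?case using w_gt1 w'_neg by (simp add: xx_def xc_def rr0 QQ0)
next
  case (Suc n)
  have a1: "uu n \<ge> 1" using Suc unfolding uu_def by (simp add: le_floor_iff)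
  have "xx n - of_int (uu n) < 1" unfolding uu_def by linarith
  then have "1 / (xx n - of_int (uu n)) > 1" using xx_frac[of n] by (simp add: less_divide_eq)
  then have "xx (Suc n) > 1" using xx_step[of n] by simp
  moreover have "xc n - of_int (uu n) < 0" using Suc a1 by simp
  then have "1 / (xc n - of_int (uu n)) < 0" by simp
  then have "xc (Suc n) < 0" using xc_step[of n] by simp
  ultimately show ?case by simp
qed

lemma xc_gt: "xc (Suc n) > -1"
proof -
  have a1: "uu n \<ge> 1" using xx_gt1_xc_neg[of n] unfolding uu_def by (simp add: le_floor_iff)
  have "xc n - of_int (uu n) < -1" using xx_gt1_xc_neg[of n] a1 by simp
  then have "1 / (xc n - of_int (uu n)) > -1"
    by (smt (verit) divide_less_eq_1_neg divide_minus_left divide_pos_neg)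
  then show ?thesis using xc_step[of n] by simp
qed

lemma uu_ge1: "uu n \<ge> 1"
  using xx_gt1_xc_neg[of n] unfolding uu_def by (simp add: le_floor_iff)

lemma diff_xx_xc: "xx n - xc n = sq / of_int (QQ n)"
  unfolding xx_def xc_def using w_minus QQ_nz[of n] by (simp add: diff_divide_distrib[symmetric])

lemma QQ_pos: "n \<ge> 1 \<Longrightarrow> QQ n > 0"
proof -
  have "xx n - xc n > 0" using xx_gt1_xc_neg[of n] by simp
  then have "sq / of_int (QQ n) > 0" using diff_xx_xc by simp
  then show ?thesis using sq_pos by (simp add: zero_less_divide_iff)
qed

lemma QQ_pos': "QQ n > 0"
  using QQ_pos[of n] by (cases n) (auto simp: QQ0)

lemma QQ_lt_sq: "of_int (QQ n) < sq"
proof -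
  have "xx n - xc n > 1" using xx_gt1_xc_neg[of n] by simp
  then have "sq / of_int (QQ n) > 1" using diff_xx_xc by simp
  then show ?thesis using QQ_pos'[of n] by (simp add: less_divide_eq)
qed

lemma rr_bounds: "n \<ge> 1 \<Longrightarrow> - of_int (QQ n) < of_int (rr n) + w' \<and> of_int (rr n) + w' < 0"
proof -
  assume n: "n \<ge> 1"
  obtain m where m: "n = Suc m" using n by (cases n) auto
  have q: "of_int (QQ n) > (0::real)" using QQ_pos[OF n] by simp
  have "xc n > -1" "xc n < 0" using xc_gt[of m] xx_gt1_xc_neg[of n] m by auto
  then show ?thesis unfolding xc_def using q by (simp add: divide_less_eq less_divide_eq)
qed

lemma uu_upper: "n \<ge> 1 \<Longrightarrow> of_int (uu n) < sq / of_int (QQ n)"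
proof -
  assume n: "n \<ge> 1"
  have q: "of_int (QQ n) > (0::real)" using QQ_pos[OF n] by simp
  have "of_int (rr n) + w = of_int (rr n) + w' + sq" using w_minus by simp
  then have "of_int (rr n) + w < sq" using rr_bounds[OF n] by simp
  then have "xx n < sq / of_int (QQ n)" unfolding xx_def using q by (simp add: divide_strict_right_mono)
  moreover have "of_int (uu n) \<le> xx n" unfolding uu_def by simp
  ultimately show ?thesis by simp
qed

lemma uu_lower: "n \<ge> 1 \<Longrightarrow> of_int (uu n) > sq / of_int (QQ n) - 2"
proof -
  assume n: "n \<ge> 1"
  have q: "of_int (QQ n) > (0::real)" using QQ_pos[OF n] by simp
  have "of_int (rr n) + w = of_int (rr n) + w' + sq" using w_minus by simp
  then have "of_int (rr n) + w > sq - of_int (QQ n)" using rr_bounds[OF n] by simp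
  then have "xx n > (sq - of_int (QQ n)) / of_int (QQ n)" unfolding xx_def using q
    by (simp add: divide_strict_right_mono)
  also have "(sq - of_int (QQ n)) / of_int (QQ n) = sq / of_int (QQ n) - 1" using q by (simp add: field_simps)
  finally have "xx n > sq / of_int (QQ n) - 1" .
  moreover have "of_int (uu n) > xx n - 1" unfolding uu_def by linarith
  ultimately show ?thesis by simp
qed

end

context qf begin

lemma uu_st: "st m = st n \<Longrightarrow> uu m = uu n"
  unfolding uu_def xx_def rr_def QQ_def by simp

lemma st_inj:
  assumes m: "m \<ge> 1" and n: "n \<ge> 1" and e: "st (Suc m) = st (Suc n)"
  shows "st m = st n"
proof -
  have r1: "rr (Suc m) = rr (Suc n)" and q1: "QQ (Suc m) = QQ (Suc n)" using e by (simp_all add: rr_def QQ_def)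
  have "QQ m * QQ (Suc m) = QQ n * QQ (Suc m)" using QQ_mult[of m] QQ_mult[of n] r1 q1 by simp
  then have qe: "QQ m = QQ n" using QQ_nz[of "Suc m"] by simp
  have "uu m * QQ m - rr m - sg = uu n * QQ n - rr n - sg" using r1 rr_Suc by simp
  then have de: "rr m - rr n = (uu m - uu n) * QQ m" using qe by (simp add: algebra_simps)
  have bm: "- of_int (QQ m) < of_int (rr m) + w' \<and> of_int (rr m) + w' < 0" using rr_bounds[OF m] .
  have bn: "- of_int (QQ m) < of_int (rr n) + w' \<and> of_int (rr n) + w' < 0" using rr_bounds[OF n] qe by simp
  have "\<bar>of_int (rr m) - of_int (rr n)\<bar> < (of_int (QQ m) :: real)" using bm bn by linarith
  then have h: "real_of_int \<bar>rr m - rr n\<bar> < real_of_int (QQ m)" by simp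
  then have a: "\<bar>rr m - rr n\<bar> < QQ m" using of_int_less_iff by blast
  have qp: "QQ m > 0" using QQ_pos[OF m] .
  have "\<bar>uu m - uu n\<bar> * QQ m < 1 * QQ m" using a de qp by (simp add: abs_mult)
  then have "\<bar>uu m - uu n\<bar> < 1" using qp by (simp only: mult_less_cancel_right)
  then have "uu m = uu n" by simp
  then have "rr m = rr n" using de by simp
  then show ?thesis using qe st_eq by simp
qed

lemma st_range: "n \<ge> 1 \<Longrightarrow> st n \<in> {\<lfloor>- w' - sq\<rfloor>..\<lceil>- w'\<rceil>} \<times> {1..\<lceil>sq\<rceil>}"
proof -
  assume n: "n \<ge> 1"
  have b: "- of_int (QQ n) < of_int (rr n) + w'" "of_int (rr n) + w' < 0" using rr_bounds[OF n] by auto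
  have q: "of_int (QQ n) < sq" by (rule QQ_lt_sq)
  have "of_int \<lfloor>- w' - sq\<rfloor> \<le> - w' - sq" by simp
  then have "of_int \<lfloor>- w' - sq\<rfloor> < (of_int (rr n) :: real)" using b q by linarith
  then have 1: "\<lfloor>- w' - sq\<rfloor> \<le> rr n" by simp
  have "(of_int (rr n) :: real) \<le> of_int \<lceil>- w'\<rceil>" using b le_of_int_ceiling[of "- w'"] by linarith
  then have 2: "rr n \<le> \<lceil>- w'\<rceil>" by simp
  have "(of_int (QQ n) :: real) \<le> of_int \<lceil>sq\<rceil>" using q le_of_int_ceiling[of sq] by linarith
  then have 3: "QQ n \<le> \<lceil>sq\<rceil>" by simp
  have 4: "QQ n \<ge> 1" using QQ_pos[OF n] by simp
  show ?thesis using 1 2 3 4 st_eq[of n] by simp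
qed

lemma st_repeat: "\<exists>i j. 1 \<le> i \<and> i < j \<and> st i = st j"
proof -
  have "\<not> inj_on st {1..}"
  proof
    assume inj: "inj_on st {1..}"
    have "st ` {1..} \<subseteq> {\<lfloor>- w' - sq\<rfloor>..\<lceil>- w'\<rceil>} \<times> {1..\<lceil>sq\<rceil>}" by (rule image_subsetI) (simp add: st_range)
    then have "finite (st ` {1..})" by (rule finite_subset) simp
    then have "finite ({1..} :: nat set)" using finite_imageD inj by blast
    then show False using infinite_Ici[of "1::nat"] by simp
  qed
  then obtain i j where ij: "i \<ge> 1" "j \<ge> 1" "i \<noteq> j" "st i = st j" unfolding inj_on_def by auto
  show ?thesis
  proof (cases "i < j")
    case True then show ?thesis using ij by blast
  next
    case False then have "j < i" using ij by simp
    then show ?thesis using ij by (intro exI[of _ j] exI[of _ i]) simp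
  qed
qed

lemma period_from:
  assumes i: "1 \<le> i" and ij: "i < j" and e: "st i = st j"
  shows "n \<ge> 1 \<Longrightarrow> st (n + (j - i)) = st n"
proof -
  define p where "p = j - i"
  have fw: "st (i + k + p) = st (i + k)" for k
  proof (induction k)
    case 0 then show ?case using e ij p_def by simp
  next
    case (Suc k) then show ?case by simp
  qed
  have bw: "k < i \<Longrightarrow> st (i - k + p) = st (i - k)" for k
  proof (induction k)
    case 0 then show ?case using fw[of 0] by simp
  next
    case (Suc k)
    have e1: "Suc (i - Suc k) = i - k" using Suc.prems by simp
    have e2: "Suc (i - Suc k + p) = i - k + p" using Suc.prems by simp
    have "st (Suc (i - Suc k + p)) = st (Suc (i - Suc k))"
      unfolding e1 e2 using Suc.IH Suc.prems by simp
    then show ?case using st_inj[of "i - Suc k + p" "i - Suc k"] Suc.prems by simp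
  qed
  assume n: "n \<ge> 1"
  show "st (n + (j - i)) = st n"
  proof (cases "n \<ge> i")
    case True
    then obtain k where "n = i + k" using le_Suc_ex by blast
    then show ?thesis using fw[of k] p_def by simp
  next
    case False
    then have "i - (i - n) = n" "i - n < i" using n by auto
    then show ?thesis using bw[of "i - n"] p_def by simp
  qed
qed

definition ss :: nat where "ss = cf_period w"

lemma ss_props: "ss > 0 \<and> (\<forall>n\<ge>1. uu (n + ss) = uu n)"
  and ss_min: "p > 0 \<Longrightarrow> (\<forall>n\<ge>1. uu (n + p) = uu n) \<Longrightarrow> ss \<le> p"
proof -
  obtain i j where ij: "1 \<le> i" "i < j" "st i = st j" using st_repeat by blast
  have per: "\<forall>n\<ge>1. uu (n + (j - i)) = uu n"
  proof (intro allI impI)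
    fix n :: nat assume "n \<ge> 1"
    then have "st (n + (j - i)) = st n" by (rule period_from[OF ij])
    then show "uu (n + (j - i)) = uu n" by (rule uu_st)
  qed
  have ex: "\<exists>p. p > 0 \<and> (\<forall>n\<ge>1. cf w (n + p) = cf w n)"
    unfolding cf_uu using per ij(2) by (intro exI[of _ "j - i"]) simp
  show "ss > 0 \<and> (\<forall>n\<ge>1. uu (n + ss) = uu n)"
    using LeastI_ex[OF ex] unfolding ss_def cf_period_def cf_uu by simp
  show "p > 0 \<Longrightarrow> (\<forall>n\<ge>1. uu (n + p) = uu n) \<Longrightarrow> ss \<le> p"
    unfolding ss_def cf_period_def cf_uu by (rule Least_le) blast
qed

lemma xx_pos: "xx n > 0" using xx_gt1_xc_neg[of n] by simp

lemma xx_rec: "xx n - of_int (uu n) = 1 / xx (Suc n)"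
proof -
  have "xx (Suc n) = 1 / (xx n - of_int (uu n))" using xx_step[of n] by simp
  then show ?thesis by simp
qed

lemma xx_period: "n \<ge> 1 \<Longrightarrow> xx (n + ss) = xx n"
proof -
  obtain i j where ij: "1 \<le> i" "i < j" "st i = st j" using st_repeat by blast
  define p where "p = j - i"
  have p0: "p > 0" using ij p_def by simp
  have xp: "m \<ge> 1 \<Longrightarrow> xx (m + p) = xx m" for m
    using period_from[OF ij, of m] p_def unfolding xx_def rr_def QQ_def by simp
  define d where "d m = xx m - xx (m + ss)" for m
  have us: "m \<ge> 1 \<Longrightarrow> uu (m + ss) = uu m" for m using ss_props by simp
  have drel: "\<bar>d (Suc m)\<bar> = \<bar>d m\<bar> * (xx (Suc m) * xx (Suc m + ss))" if m: "m \<ge> 1" for m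
  proof -
    have "d m = 1 / xx (Suc m) - 1 / xx (Suc (m + ss))"
      unfolding d_def using xx_rec[of m] xx_rec[of "m + ss"] us[OF m] by simp
    also have "\<dots> = - d (Suc m) / (xx (Suc m) * xx (Suc m + ss))"
      unfolding d_def using xx_pos[of "Suc m"] xx_pos[of "Suc m + ss"] by (simp add: field_simps)
    finally have "d m * (xx (Suc m) * xx (Suc m + ss)) = - d (Suc m)"
      using xx_pos[of "Suc m"] xx_pos[of "Suc m + ss"] by (simp add: field_simps)
    then have "\<bar>d m * (xx (Suc m) * xx (Suc m + ss))\<bar> = \<bar>d (Suc m)\<bar>" by simp
    then show ?thesis using xx_pos[of "Suc m"] xx_pos[of "Suc m + ss"] by (simp add: abs_mult)
  qed
  have prod1: "xx (Suc m) * xx (Suc m + ss) > 1" for m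
    using xx_gt1_xc_neg[of "Suc m"] xx_gt1_xc_neg[of "Suc m + ss"]
    by (intro less_1_mult) auto
  have mono1: "\<bar>d (Suc m)\<bar> \<ge> \<bar>d m\<bar>" if "m \<ge> 1" for m
  proof -
    have "\<bar>d m\<bar> * 1 \<le> \<bar>d m\<bar> * (xx (Suc m) * xx (Suc m + ss))"
      using prod1[of m] by (intro mult_left_mono) auto
    then show ?thesis using drel[OF that] by simp
  qed
  have strict: "\<bar>d (Suc m)\<bar> > \<bar>d m\<bar>" if "m \<ge> 1" "d m \<noteq> 0" for m
  proof -
    have "\<bar>d m\<bar> * 1 < \<bar>d m\<bar> * (xx (Suc m) * xx (Suc m + ss))"
      using prod1[of m] that by (intro mult_strict_left_mono) auto
    then show ?thesis using drel[OF that(1)] by simp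
  qed
  have monok: "\<bar>d (m + k)\<bar> \<ge> \<bar>d m\<bar>" if "m \<ge> 1" for m k
  proof (induction k)
    case 0 then show ?case by simp
  next
    case (Suc k)
    have "\<bar>d (Suc (m + k))\<bar> \<ge> \<bar>d (m + k)\<bar>" using mono1[of "m + k"] that by simp
    then show ?case using Suc by simp
  qed
  assume n: "n \<ge> 1"
  show "xx (n + ss) = xx n"
  proof (rule ccontr)
    assume "xx (n + ss) \<noteq> xx n"
    then have dn: "d n \<noteq> 0" unfolding d_def by simp
    have "\<bar>d (Suc n + (p - 1))\<bar> \<ge> \<bar>d (Suc n)\<bar>" using monok[of "Suc n" "p - 1"] by simp
    moreover have "Suc n + (p - 1) = n + p" using p0 by simp
    moreover have "d (n + p) = d n" unfolding d_def using xp[OF n] xp[of "n + ss"] n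
      by (simp add: add.commute add.left_commute)
    ultimately have "\<bar>d n\<bar> \<ge> \<bar>d (Suc n)\<bar>" by simp
    then show False using strict[OF n dn] by simp
  qed
qed

lemma xx_inj: "xx m = xx n \<Longrightarrow> st m = st n"
proof -
  assume e: "xx m = xx n"
  have "(of_int (rr m) + w) * of_int (QQ n) = (of_int (rr n) + w) * of_int (QQ m)"
    using e QQ_nz[of m] QQ_nz[of n] unfolding xx_def by (simp add: field_simps)
  then have "of_int (rr m * QQ n) + of_int (QQ n) * w = of_int (rr n * QQ m) + of_int (QQ m) * w"
    by (simp add: algebra_simps)
  then have "rr m * QQ n = rr n * QQ m \<and> QQ n = QQ m" using int_unique by blast
  then have "QQ m = QQ n" "rr m = rr n" using QQ_nz[of m] by auto
  then show ?thesis using st_eq by simp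
qed

lemma st_period: "n \<ge> 1 \<Longrightarrow> st (n + ss) = st n"
  using xx_period xx_inj by blast

lemma QQ_ss: "QQ ss = 1"
proof -
  have "st (Suc ss) = st 1" using st_period[of 1] by simp
  then have r: "rr (Suc ss) = rr 1" and q: "QQ (Suc ss) = QQ 1" by (simp_all add: rr_def QQ_def)
  have "QQ ss * QQ (Suc ss) = QQ 0 * QQ 1" using QQ_mult[of ss] QQ_mult[of 0] r by simp
  then show ?thesis using q QQ_nz[of 1] QQ0 by simp
qed

lemma st_distinct: "1 \<le> i \<Longrightarrow> i < j \<Longrightarrow> j \<le> ss \<Longrightarrow> st i \<noteq> st j"
proof
  assume ij: "1 \<le> i" "i < j" "j \<le> ss" and e: "st i = st j"
  have "\<forall>n\<ge>1. uu (n + (j - i)) = uu n"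
  proof (intro allI impI)
    fix n :: nat assume "n \<ge> 1"
    then have "st (n + (j - i)) = st n" by (rule period_from[OF ij(1,2) e])
    then show "uu (n + (j - i)) = uu n" by (rule uu_st)
  qed
  then have "ss \<le> j - i" using ss_min[of "j - i"] ij by simp
  then show False using ij by simp
qed

lemma uu_ss: "uu ss = 2 * uu 0 - sg"
proof -
  have s1: "ss \<ge> 1" using ss_props by simp
  have b: "-1 < of_int (rr ss) + w'" "of_int (rr ss) + w' < 0" using rr_bounds[OF s1] QQ_ss by auto
  have ww: "w' = of_int sg - w" using w_plus by simp
  have "of_int (rr ss) \<le> w - of_int sg" "w - of_int sg < of_int (rr ss) + 1" using b unfolding ww by auto
  then have "\<lfloor>w - of_int sg\<rfloor> = rr ss" by (intro floor_unique) auto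
  then have f: "rr ss = \<lfloor>w\<rfloor> - sg" by simp
  have "uu ss = \<lfloor>of_int (rr ss) + w\<rfloor>" unfolding uu_def xx_def QQ_ss by simp
  also have "\<dots> = rr ss + \<lfloor>w\<rfloor>" by simp
  finally have "uu ss = 2 * \<lfloor>w\<rfloor> - sg" using f by simp
  moreover have "uu 0 = \<lfloor>w\<rfloor>" unfolding uu_def xx_def rr0 QQ0 by simp
  ultimately show ?thesis by simp
qed

end

context qf begin

lemma Lat_step:
  fixes r Q a r' Q' :: int
  assumes Q: "Q \<noteq> 0" and QQ': "Q * Q' = - Nm r'" and r': "r' = a * Q - r - sg"
  shows "Lat Q' r' = (\<lambda>z. ((of_int r' + w) / of_int Q) * z) ` Lat Q r"
proof -
  define g where "g = (of_int r' + w) / of_int Q"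
  have gQ: "g * of_int Q = of_int r' + w" unfolding g_def using Q by simp
  have rw: "(of_int r :: real) + w = of_int a * of_int Q - (of_int r' + w')"
  proof -
    have "(of_int r :: real) = of_int a * of_int Q - of_int r' - of_int sg" using r' by simp
    then show ?thesis using w_plus by (simp add: algebra_simps)
  qed
  have key0: "(of_int r' + w) * (of_int r + w) = of_int a * of_int Q * (of_int r' + w) + of_int Q * of_int Q'"
  proof -
    have "(of_int r' + w) * (of_int r + w) = of_int a * of_int Q * (of_int r' + w) - (of_int r' + w) * (of_int r' + w')"
      unfolding rw by (simp add: algebra_simps)
    also have "(of_int r' + w) * (of_int r' + w') = - (of_int Q * of_int Q')"
    proof -
      have "(of_int r' + w) * (of_int r' + w') = of_int (Nm r')" by (rule Nm_eq)
      also have "Nm r' = - (Q * Q')" using QQ' by simp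
      finally show ?thesis by simp
    qed
    finally show ?thesis by simp
  qed
  have key: "g * (of_int r + w) = of_int Q' + of_int a * (of_int r' + w)"
    unfolding g_def using key0 Q by (simp add: field_simps)
  show ?thesis
  proof
    show "Lat Q' r' \<subseteq> (\<lambda>z. ((of_int r' + w) / of_int Q) * z) ` Lat Q r"
    proof
      fix x assume "x \<in> Lat Q' r'"
      then obtain k l where x: "x = of_int (k * Q') + of_int l * (of_int r' + w)" unfolding Lat_def by blast
      have "g * (of_int ((l - k * a) * Q) + of_int k * (of_int r + w)) = of_int (l - k * a) * (g * of_int Q) + of_int k * (g * (of_int r + w))"
        by (simp add: algebra_simps)
      also have "\<dots> = x" unfolding gQ key x by (simp add: algebra_simps)
      finally have "x = (\<lambda>z. ((of_int r' + w) / of_int Q) * z) (of_int ((l - k * a) * Q) + of_int k * (of_int r + w))"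
        unfolding g_def by simp
      then show "x \<in> (\<lambda>z. ((of_int r' + w) / of_int Q) * z) ` Lat Q r"
        by (rule image_eqI) (rule Lat_I)
    qed
    show "(\<lambda>z. ((of_int r' + w) / of_int Q) * z) ` Lat Q r \<subseteq> Lat Q' r'"
    proof
      fix x assume "x \<in> (\<lambda>z. ((of_int r' + w) / of_int Q) * z) ` Lat Q r"
      then obtain z where z: "z \<in> Lat Q r" "x = g * z" unfolding g_def by blast
      then obtain i j where x: "x = g * (of_int (i * Q) + of_int j * (of_int r + w))"
        unfolding Lat_def by blast
      have "x = of_int i * (g * of_int Q) + of_int j * (g * (of_int r + w))" unfolding x by (simp add: algebra_simps)
      also have "\<dots> = of_int (j * Q') + of_int (i + j * a) * (of_int r' + w)" unfolding gQ key by (simp add: algebra_simps)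
      finally show "x \<in> Lat Q' r'" by (simp only: Lat_I)
    qed
  qed
qed

primrec XX :: "nat \<Rightarrow> real" where
  "XX 0 = 1" | "XX (Suc n) = XX n * xx (Suc n)"

primrec XC :: "nat \<Rightarrow> real" where
  "XC 0 = 1" | "XC (Suc n) = XC n * xc (Suc n)"

definition Ln :: "nat \<Rightarrow> real set" where "Ln n = Lat (QQ n) (rr n)"
definition Gen :: "nat \<Rightarrow> real" where "Gen n = of_int (QQ n) * XX n"

lemma Ln_gen: "Ln n = {Gen n * y | y. y \<in> OK D}"
proof (induction n)
  case 0
  have "Ln 0 = OK D" unfolding Ln_def QQ0 by (rule Lat_1)
  then show ?case unfolding Gen_def by (simp add: QQ0)
next
  case (Suc n)
  define g where "g = (of_int (rr (Suc n)) + w) / of_int (QQ n)"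
  have "Ln (Suc n) = (\<lambda>z. g * z) ` Ln n"
    unfolding Ln_def g_def by (rule Lat_step[OF QQ_nz QQ_mult rr_Suc])
  also have "\<dots> = {g * Gen n * y | y. y \<in> OK D}"
  proof
    show "(\<lambda>z. g * z) ` Ln n \<subseteq> {g * Gen n * y |y. y \<in> OK D}"
    proof
      fix x assume "x \<in> (\<lambda>z. g * z) ` Ln n"
      then obtain y where "y \<in> OK D" "x = g * (Gen n * y)" unfolding Suc by blast
      then show "x \<in> {g * Gen n * y |y. y \<in> OK D}" by (auto simp only: mult.assoc)
    qed
    show "{g * Gen n * y |y. y \<in> OK D} \<subseteq> (\<lambda>z. g * z) ` Ln n"
    proof
      fix x assume "x \<in> {g * Gen n * y |y. y \<in> OK D}"
      then obtain y where y: "y \<in> OK D" "x = g * (Gen n * y)" by (auto simp only: mult.assoc)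
      have "Gen n * y \<in> Ln n" unfolding Suc using y(1) by blast
      then show "x \<in> (\<lambda>z. g * z) ` Ln n" using y(2) by blast
    qed
  qed
  also have "g * Gen n = Gen (Suc n)"
    unfolding g_def Gen_def XX.simps xx_def using QQ_nz[of n] QQ_nz[of "Suc n"] by (simp add: field_simps)
  finally show ?case .
qed

lemma xx_K: "xx n \<in> Kset \<and> cnj (xx n) = xc n"
proof -
  have a: "of_int (rr n) + w \<in> Kset" using K_add K_int K_w by blast
  have c: "cnj (of_int (rr n) + w) = of_int (rr n) + w'" using cnj_add[OF K_int K_w] by simp
  have q: "(of_int (QQ n) :: real) \<noteq> 0" using QQ_nz by simp
  show ?thesis using K_divide[OF a K_int q] c unfolding xx_def xc_def by simp
qed

lemma XX_K: "XX n \<in> Kset \<and> cnj (XX n) = XC n"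
proof (induction n)
  case 0 then show ?case using K_int[of 1] cnj_int[of 1] by simp
next
  case (Suc n) then show ?case using K_mult cnj_mult xx_K[of "Suc n"] by simp
qed

lemma Gen_K: "Gen n \<in> Kset \<and> cnj (Gen n) = of_int (QQ n) * XC n"
  unfolding Gen_def using K_mult[OF K_int] cnj_mult[OF K_int] XX_K[of n] by simp

lemma XX_pos: "XX n > 0"
  by (induction n) (auto simp: xx_pos)

lemma XX_mono: "XX n < XX (Suc n)"
  using XX_pos[of n] xx_gt1_xc_neg[of "Suc n"] by simp

lemma XX_ge1: "XX n \<ge> 1"
proof (induction n)
  case (Suc n)
  have "XX n * xx (Suc n) \<ge> 1 * xx (Suc n)" by (rule mult_right_mono) (use Suc xx_pos[of "Suc n"] in auto)
  moreover have "xx (Suc n) > 1" using xx_gt1_xc_neg[of "Suc n"] by simp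
  ultimately have "XX n * xx (Suc n) \<ge> 1" by linarith
  then show ?case by simp
qed simp

lemma XC_sign: "(-1) ^ n * XC n > 0"
proof (induction n)
  case 0 then show ?case by simp
next
  case (Suc n)
  have "(-1) ^ Suc n * XC (Suc n) = ((-1) ^ n * XC n) * (- xc (Suc n))" by simp
  moreover have "- xc (Suc n) > 0" using xx_gt1_xc_neg[of "Suc n"] by simp
  then have "((-1) ^ n * XC n) * (- xc (Suc n)) > 0" by (rule mult_pos_pos[OF Suc])
  ultimately show ?case by linarith
qed

lemma XC_nz: "XC n \<noteq> 0" using XC_sign[of n] by auto

lemma Gen_OK: "Gen n \<in> OK D"
proof -
  have "Gen n * 1 \<in> Ln n" unfolding Ln_gen using OK_1 by blast
  then show ?thesis using Lat_OK unfolding Ln_def by auto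
qed

lemma Gen_generates: "generates D (Gen n) (Ln n)"
  unfolding generates_def using Gen_OK Ln_gen by simp

lemma Gen_norm: "Gen n * cnj (Gen n) = of_int (QQ n) ^ 2 * (XX n * XC n)"
  using Gen_K[of n] unfolding Gen_def by (simp add: power2_eq_square algebra_simps)

lemma Ln_ideal: "nonzero_ideal D (Ln n)"
  unfolding Ln_def using Lat_ideal QQ_pos' QQ_inv by simp

lemma Ln_prim: "primitive D (Ln n)"
  unfolding Ln_def using Lat_primitive QQ_pos' by simp

lemma Ln_norm: "ideal_norm D (Ln n) = nat (QQ n)"
  unfolding Ln_def using ideal_norm_Lat QQ_pos' by simp

lemma Lam_rep: "y \<in> OK D \<Longrightarrow> \<exists>i j. XX n * y = of_int i + of_int j * xx n"
proof -
  assume y: "y \<in> OK D"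
  have "Gen n * y \<in> Ln n" unfolding Ln_gen using y by blast
  then obtain i j where e: "Gen n * y = of_int (i * QQ n) + of_int j * (of_int (rr n) + w)"
    unfolding Ln_def Lat_def by blast
  have q: "(of_int (QQ n) :: real) \<noteq> 0" using QQ_nz by simp
  have "XX n * y = (of_int (i * QQ n) + of_int j * (of_int (rr n) + w)) / of_int (QQ n)"
    using e q unfolding Gen_def by (simp add: field_simps)
  also have "\<dots> = of_int i + of_int j * xx n" unfolding xx_def using q by (simp add: field_simps)
  finally show ?thesis by blast
qed

lemma inv_XX_OK: "1 / XX n \<in> OK D"
proof -
  have "of_int (1 * QQ n) + of_int 0 * (of_int (rr n) + w) \<in> Ln n" unfolding Ln_def by (rule Lat_I)
  then have "of_int (QQ n) \<in> Ln n" by simp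
  then obtain y where y: "y \<in> OK D" "of_int (QQ n) = Gen n * y" unfolding Ln_gen by blast
  have "y = 1 / XX n" using y(2) QQ_nz[of n] XX_pos[of n] unfolding Gen_def by (simp add: field_simps)
  then show ?thesis using y(1) by simp
qed

definition eps :: real where "eps = XX ss"

lemma ss_ge1: "ss \<ge> 1" using ss_props by simp

lemma Ln_ss: "Ln ss = OK D"
  unfolding Ln_def QQ_ss by (rule Lat_1)

lemma Ln_0: "Ln 0 = OK D"
  unfolding Ln_def QQ0 by (rule Lat_1)

lemma eps_gt1: "eps > 1"
proof -
  have "XX (Suc n) > 1" for n
  proof -
    have "XX (Suc n) = XX n * xx (Suc n)" by simp
    moreover have "XX n * xx (Suc n) \<ge> 1 * xx (Suc n)" using XX_ge1[of n] xx_pos[of "Suc n"]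
      by (intro mult_right_mono) auto
    ultimately show ?thesis using xx_gt1_xc_neg[of "Suc n"] by linarith
  qed
  then show ?thesis unfolding eps_def using ss_ge1 by (cases ss) auto
qed

lemma eps_OK: "eps \<in> OK D" using Gen_OK[of ss] unfolding Gen_def eps_def QQ_ss by simp

lemma eps_inv_OK: "1 / eps \<in> OK D" using inv_XX_OK unfolding eps_def by simp

lemma eps_K: "eps \<in> Kset \<and> cnj eps = XC ss" using XX_K unfolding eps_def by simp

end

context qf begin

definition minOK :: "real \<Rightarrow> bool" where
  "minOK \<mu> \<longleftrightarrow> \<mu> \<in> OK D \<and> \<mu> \<noteq> 0 \<and>
     (\<forall>\<xi>\<in>OK D. \<xi> \<noteq> 0 \<longrightarrow> \<not> (\<bar>\<xi>\<bar> < \<bar>\<mu>\<bar> \<and> \<bar>cnj \<xi>\<bar> < \<bar>cnj \<mu>\<bar>))"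

definition unit :: "real \<Rightarrow> bool" where
  "unit \<eta> \<longleftrightarrow> \<eta> \<in> OK D \<and> 1 / \<eta> \<in> OK D \<and> \<eta> \<noteq> 0"

lemma unit_scale:
  assumes u: "unit \<eta>" and m: "minOK \<mu>"
  shows "minOK (\<eta> * \<mu>)"
proof -
  have e: "\<eta> \<in> OK D" "1 / \<eta> \<in> OK D" "\<eta> \<noteq> 0" using u unfolding unit_def by auto
  have mu: "\<mu> \<in> OK D" "\<mu> \<noteq> 0" using m unfolding minOK_def by auto
  have eK: "\<eta> \<in> Kset" "\<mu> \<in> Kset" using e mu OK_K by auto
  have ce: "cnj \<eta> \<noteq> 0" using cnj_nonzero eK e by simp
  show ?thesis unfolding minOK_def
  proof (intro conjI)
    show "\<eta> * \<mu> \<in> OK D" using OK_mult e mu by simp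
    show "\<eta> * \<mu> \<noteq> 0" using e mu by simp
  next
    show "\<forall>\<xi>\<in>OK D. \<xi> \<noteq> 0 \<longrightarrow> \<not> (\<bar>\<xi>\<bar> < \<bar>\<eta> * \<mu>\<bar> \<and> \<bar>cnj \<xi>\<bar> < \<bar>cnj (\<eta> * \<mu>)\<bar>)"
  proof (intro ballI impI notI)
    fix \<xi> assume xi: "\<xi> \<in> OK D" "\<xi> \<noteq> 0" and h: "\<bar>\<xi>\<bar> < \<bar>\<eta> * \<mu>\<bar> \<and> \<bar>cnj \<xi>\<bar> < \<bar>cnj (\<eta> * \<mu>)\<bar>"
    define z where "z = \<xi> * (1 / \<eta>)"
    have zO: "z \<in> OK D" unfolding z_def by (rule OK_mult[OF xi(1) e(2)])
    have z0: "z \<noteq> 0" unfolding z_def using xi e by simp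
    have xK: "\<xi> \<in> Kset" using xi OK_K by simp
    have cz: "cnj z = cnj \<xi> / cnj \<eta>" unfolding z_def using K_divide[OF xK eK(1) e(3)] by simp
    have "\<bar>z\<bar> = \<bar>\<xi>\<bar> / \<bar>\<eta>\<bar>" unfolding z_def by (simp add: abs_divide)
    also have "\<dots> < \<bar>\<mu>\<bar>" using h e by (simp add: abs_mult divide_less_eq mult.commute)
    finally have 1: "\<bar>z\<bar> < \<bar>\<mu>\<bar>" .
    have "\<bar>cnj z\<bar> = \<bar>cnj \<xi>\<bar> / \<bar>cnj \<eta>\<bar>" unfolding cz by (simp add: abs_divide)
    also have "\<dots> < \<bar>cnj \<mu>\<bar>" using h ce cnj_mult[OF eK] by (simp add: abs_mult divide_less_eq mult.commute)
    finally have 2: "\<bar>cnj z\<bar> < \<bar>cnj \<mu>\<bar>" .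
    show False using m zO z0 1 2 unfolding minOK_def by blast
  qed
  qed
qed

lemma lemM:
  fixes x x' \<nu> \<nu>' y y' :: real and i j a :: int
  assumes y: "y = x - of_int a" and y': "y' = x' - of_int a" and y0: "0 < y" and x': "x' < 0" and a: "a \<ge> 1"
    and nu: "\<nu> = of_int i + of_int j * x" and nu': "\<nu>' = of_int i + of_int j * x'"
    and lo: "y < \<nu>" and hi: "\<nu> < 1" and c: "\<bar>\<nu>'\<bar> \<le> \<bar>y'\<bar>"
  shows False
proof -
  define i0 where "i0 = i + j * a"
  have nu2: "\<nu> = of_int i0 + of_int j * y" unfolding i0_def nu y by (simp add: algebra_simps)
  have nu2': "\<nu>' = of_int i0 + of_int j * y'" unfolding i0_def nu' y' by (simp add: algebra_simps)
  have yn: "y' < 0" using y' x' a by simp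
  consider "j = 0" | "j \<ge> 1" | "j \<le> -1" by linarith
  then show False
  proof cases
    case 1
    then have "\<nu> = of_int i0" using nu2 by simp
    then have "0 < i0" "i0 < 1" using lo hi y0 by auto
    then show False by simp
  next
    case 2
    have jy: "of_int j * y > 0" using 2 y0 by simp
    have "of_int i0 < (1::real)" using nu2 hi jy by linarith
    then have i0: "i0 \<le> 0" by simp
    have jy': "of_int j * y' \<le> y'"
    proof -
      have "(of_int j - 1) * y' \<le> 0" using 2 yn by (intro mult_nonneg_nonpos) auto
      then show ?thesis by (simp add: algebra_simps)
    qed
    have "\<nu>' \<le> y'" using nu2' i0 jy' by linarith
    then have "\<nu>' = y'" using c yn by linarith
    then have "of_int i0 + (of_int j - 1) * y' = 0" using nu2' by (simp add: algebra_simps)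
    moreover have "(of_int j - 1) * y' \<le> 0" using 2 yn by (intro mult_nonneg_nonpos) auto
    ultimately have "i0 = 0" "(of_int j - 1) * y' = 0" using i0 by linarith+
    then have "j = 1" using yn by simp
    then have "\<nu> = y" using nu2 \<open>i0 = 0\<close> by simp
    then show False using lo by simp
  next
    case 3
    have jy: "of_int j * y < 0" using 3 y0 by (simp add: mult_neg_pos)
    have "of_int i0 > (0::real)" using nu2 lo y0 jy by linarith
    then have i0: "i0 \<ge> 1" by simp
    have jy': "of_int j * y' \<ge> - y'"
    proof -
      have "(- of_int j - 1) * (- y') \<ge> 0" using 3 yn by (intro mult_nonneg_nonneg) auto
      then show ?thesis by (simp add: algebra_simps)
    qed
    have "\<nu>' \<ge> 1 - y'" using nu2' i0 jy' by linarith
    then show False using c yn by linarith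
  qed
qed

lemma cnj_lin: "cnj (of_int i + of_int j * xx n) = of_int i + of_int j * xc n"
proof -
  have k: "xx n \<in> Kset" "cnj (xx n) = xc n" using xx_K by auto
  have "of_int j * xx n \<in> Kset" using K_mult[OF K_int k(1)] by simp
  then show ?thesis using cnj_add[OF K_int] cnj_mult[OF K_int k(1)] k(2) by simp
qed

lemma chain:
  assumes m: "minOK \<mu>" and lo: "1 / XX (Suc n) < \<mu>" and hi: "\<mu> < 1 / XX n"
  shows False
proof -
  have mu: "\<mu> \<in> OK D" using m unfolding minOK_def by simp
  have muK: "\<mu> \<in> Kset" using OK_K mu by simp
  obtain i j where ij: "XX n * \<mu> = of_int i + of_int j * xx n" using Lam_rep[OF mu] by blast
  have XXK: "XX n \<in> Kset" "cnj (XX n) = XC n" using XX_K by auto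
  have cnu: "cnj (XX n * \<mu>) = XC n * cnj \<mu>" using cnj_mult[OF XXK(1) muK] XXK(2) by simp
  have cnu2: "cnj (XX n * \<mu>) = of_int i + of_int j * xc n" unfolding ij by (rule cnj_lin)
  have Xp: "XX n > 0" "XX (Suc n) > 0" by (rule XX_pos)+
  have yv: "xx n - of_int (uu n) = XX n / XX (Suc n)"
    using xx_rec[of n] Xp xx_pos[of "Suc n"] by (simp add: field_simps)
  have lo2: "xx n - of_int (uu n) < XX n * \<mu>"
  proof -
    have "XX n * (1 / XX (Suc n)) < XX n * \<mu>" by (rule mult_strict_left_mono[OF lo Xp(1)])
    then show ?thesis using yv by (simp del: XX.simps)
  qed
  have hi2: "XX n * \<mu> < 1" using hi Xp by (simp add: less_divide_eq mult.commute)
  define \<xi> where "\<xi> = 1 / XX (Suc n)"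
  have xiO: "\<xi> \<in> OK D" unfolding \<xi>_def by (rule inv_XX_OK)
  have xi0: "\<xi> \<noteq> 0" unfolding \<xi>_def using Xp(2) by (simp del: XX.simps)
  have "\<bar>\<xi>\<bar> < \<bar>\<mu>\<bar>" unfolding \<xi>_def using lo Xp by (simp del: XX.simps)
  then have "\<not> \<bar>cnj \<xi>\<bar> < \<bar>cnj \<mu>\<bar>" using m xiO xi0 unfolding minOK_def by blast
  moreover have "cnj \<xi> = 1 / XC (Suc n)"
    unfolding \<xi>_def using K_inverse[of "XX (Suc n)"] XX_K[of "Suc n"] Xp by (simp del: XX.simps XC.simps)
  ultimately have cm: "\<bar>cnj \<mu>\<bar> \<le> 1 / \<bar>XC (Suc n)\<bar>" by simp
  have "\<bar>cnj (XX n * \<mu>)\<bar> = \<bar>XC n\<bar> * \<bar>cnj \<mu>\<bar>" unfolding cnu by (simp add: abs_mult)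
  also have "\<dots> \<le> \<bar>XC n\<bar> * (1 / \<bar>XC (Suc n)\<bar>)" using cm by (intro mult_left_mono) auto
  also have "\<dots> = 1 / \<bar>xc (Suc n)\<bar>" using XC_nz[of n] by (simp add: abs_mult)
  also have "\<dots> = \<bar>xc n - of_int (uu n)\<bar>"
  proof -
    have e: "xc (Suc n) = 1 / (xc n - of_int (uu n))" using xc_step[of n] by simp
    show ?thesis unfolding e by (simp add: abs_divide)
  qed
  finally have c: "\<bar>cnj (XX n * \<mu>)\<bar> \<le> \<bar>xc n - of_int (uu n)\<bar>" .
  have xcn: "xc n < 0" using xx_gt1_xc_neg[of n] by simp
  show False
    by (rule lemM[OF refl refl xx_frac[of n] xcn uu_ge1[of n] ij cnu2 lo2 hi2 c])
qed

lemma search: "minOK t \<Longrightarrow> 1 / XX k \<le> t \<Longrightarrow> t \<le> 1 \<Longrightarrow> \<exists>n\<le>k. t = 1 / XX n"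
proof (induction k)
  case 0 then show ?case by simp
next
  case (Suc k)
  show ?case
  proof (cases "1 / XX k \<le> t")
    case True then show ?thesis using Suc by (meson le_SucI)
  next
    case False
    show ?thesis
    proof (cases "t = 1 / XX (Suc k)")
      case True then show ?thesis by blast
    next
      case False
      then have h1: "1 / XX (Suc k) < t" using Suc.prems by (simp del: XX.simps)
      have h2: "t < 1 / XX k" using \<open>\<not> 1 / XX k \<le> t\<close> by simp
      show ?thesis using chain[OF Suc.prems(1) h1 h2] by blast
    qed
  qed
qed

end

context qf begin

lemma OK_pow: "x \<in> OK D \<Longrightarrow> x ^ m \<in> OK D"
  by (induction m) (auto intro: OK_mult)

lemma K_pow: "x \<in> Kset \<Longrightarrow> x ^ m \<in> Kset \<and> cnj (x ^ m) = (cnj x) ^ m"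
proof (induction m)
  case 0 then show ?case using K_int[of 1] cnj_int[of 1] by simp
next
  case (Suc m) then show ?case using K_mult cnj_mult by simp
qed

lemma unit_eps: "unit eps"
  unfolding unit_def using eps_OK eps_inv_OK eps_gt1 by simp

lemma unit_pow: "unit \<eta> \<Longrightarrow> unit (\<eta> ^ m)"
  unfolding unit_def using OK_pow by (simp add: power_one_over[symmetric])

lemma unit_inv: "unit \<eta> \<Longrightarrow> unit (1 / \<eta>)"
  unfolding unit_def by simp

definition Neps :: real where "Neps = eps * cnj eps"

lemma Neps_eq: "Neps = XX ss * XC ss" unfolding Neps_def eps_def using XX_K by simp

lemma Neps_even: "even ss \<Longrightarrow> Neps > 0"
  using XC_sign[of ss] XX_pos[of ss] unfolding Neps_eq by simp

lemma Neps_odd: "odd ss \<Longrightarrow> Neps < 0"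
  using XC_sign[of ss] XX_pos[of ss] unfolding Neps_eq by (simp add: mult_pos_neg)

lemma crossing:
  fixes f :: "nat \<Rightarrow> real"
  assumes "f 0 \<le> 1" "f N > 1" shows "\<exists>m. f m \<le> 1 \<and> f (Suc m) > 1"
  using assms
proof (induction N)
  case 0 then show ?case by simp
next
  case (Suc N)
  show ?case
  proof (cases "f N \<le> 1")
    case True then show ?thesis using Suc by blast
  next
    case False then show ?thesis using Suc by simp
  qed
qed

lemma scale:
  assumes mu: "\<mu> > 0"
  shows "\<exists>\<eta>. unit \<eta> \<and> \<eta> \<in> Kset \<and> (even ss \<longrightarrow> \<eta> * cnj \<eta> > 0) \<and> 1 / eps \<le> \<eta> * \<mu> \<and> \<eta> * \<mu> \<le> 1"
proof -
  have e1: "eps > 1" by (rule eps_gt1)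
  have eK: "eps \<in> Kset" using eps_K by simp
  have epos: "eps * cnj eps = Neps" unfolding Neps_def ..
  show ?thesis
  proof (cases "\<mu> \<le> 1")
    case True
    obtain N where N: "1 / \<mu> < eps ^ N" using real_arch_pow[OF e1] by blast
    have "\<mu> * eps ^ N > 1" using N mu by (simp add: divide_less_eq mult.commute)
    then obtain m where m: "\<mu> * eps ^ m \<le> 1" "\<mu> * eps ^ Suc m > 1"
      using crossing[of "\<lambda>m. \<mu> * eps ^ m" N] True by auto
    define \<eta> where "\<eta> = eps ^ m"
    have u: "unit \<eta>" unfolding \<eta>_def by (rule unit_pow[OF unit_eps])
    have k: "\<eta> \<in> Kset" "cnj \<eta> = cnj eps ^ m" unfolding \<eta>_def using K_pow[OF eK] by auto
    have "\<eta> * cnj \<eta> = Neps ^ m" unfolding k(2) unfolding \<eta>_def epos[symmetric] by (simp add: power_mult_distrib)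
    then have n: "even ss \<longrightarrow> \<eta> * cnj \<eta> > 0" using Neps_even by simp
    have "\<eta> * \<mu> * eps > 1" using m(2) unfolding \<eta>_def by (simp add: algebra_simps)
    then have "1 / eps \<le> \<eta> * \<mu>" using e1 by (simp add: divide_le_eq)
    then show ?thesis using u k n m(1) unfolding \<eta>_def by (auto simp: mult.commute)
  next
    case False
    obtain N where N: "\<mu> < eps ^ N" using real_arch_pow[OF e1] by blast
    have "eps ^ N / \<mu> > 1" using N mu by simp
    moreover have "eps ^ 0 / \<mu> \<le> 1" using False by simp
    ultimately obtain m where m: "eps ^ m / \<mu> \<le> 1" "eps ^ Suc m / \<mu> > 1"
      using crossing[of "\<lambda>m. eps ^ m / \<mu>" N] by auto
    define \<eta> where "\<eta> = (1 / eps) ^ Suc m"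
    have u: "unit \<eta>" unfolding \<eta>_def by (rule unit_pow[OF unit_inv[OF unit_eps]])
    have ik: "1 / eps \<in> Kset" "cnj (1 / eps) = 1 / cnj eps" using K_inverse[OF eK] e1 by auto
    have k: "\<eta> \<in> Kset" "cnj \<eta> = (1 / cnj eps) ^ Suc m"
      unfolding \<eta>_def using K_pow[OF ik(1), of "Suc m"] unfolding ik(2) by blast+
    have "\<eta> * cnj \<eta> = (1 / Neps) ^ Suc m" unfolding k(2) unfolding \<eta>_def epos[symmetric]
      by (simp add: power_mult_distrib power_one_over)
    then have n: "even ss \<longrightarrow> \<eta> * cnj \<eta> > 0" using Neps_even by simp
    have ep: "eps ^ m > 0" using e1 by simp
    have "eps ^ m \<le> \<mu>" using m(1) mu by (simp add: divide_le_eq)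
    then have "eps ^ m / eps ^ Suc m \<le> \<mu> / eps ^ Suc m" using e1 by (intro divide_right_mono) auto
    then have "1 / eps \<le> \<eta> * \<mu>" unfolding \<eta>_def using e1 ep by (simp add: power_one_over field_simps)
    moreover have "\<eta> * \<mu> \<le> 1"
    proof -
      have "\<mu> < eps ^ Suc m" using m(2) mu by (simp add: less_divide_eq)
      then show ?thesis unfolding \<eta>_def using e1 by (simp add: power_one_over)
    qed
    ultimately show ?thesis using u k n by blast
  qed
qed

lemma Lat_scale_eq:
  assumes q: "q > 0" and Q: "Q > 0"
    and e: "Lat q r = (\<lambda>z. (of_int q / of_int Q) * z) ` Lat Q r'"
  shows "q = Q"
proof -
  define c where "c = (of_int q / of_int Q :: real)"
  have cR: "c \<in> \<rat>" unfolding c_def by simp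
  have "of_int (0 * q) + of_int 1 * (of_int r + w) \<in> Lat q r" by (rule Lat_I)
  then have "of_int r + w \<in> (\<lambda>z. c * z) ` Lat Q r'" using e unfolding c_def by simp
  then obtain i j where ij: "of_int r + w = c * (of_int (i * Q) + of_int j * (of_int r' + w))"
    unfolding Lat_def by blast
  have "of_int r + 1 * w = c * of_int (i * Q + j * r') + (c * of_int j) * w" using ij by (simp add: algebra_simps)
  then have "1 = c * of_int j" using rat_unique[of "of_int r" 1 "c * of_int (i * Q + j * r')" "c * of_int j"] cR by simp
  then have j1: "of_int Q = of_int q * (of_int j :: real)" unfolding c_def using Q by (simp add: field_simps)
  have "c * (of_int (0 * Q) + of_int 1 * (of_int r' + w)) \<in> (\<lambda>z. c * z) ` Lat Q r'"
    using Lat_I by blast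
  then have "c * (of_int r' + w) \<in> Lat q r" using e unfolding c_def by simp
  then obtain i' j' where ij': "c * (of_int r' + w) = of_int (i' * q) + of_int j' * (of_int r + w)"
    unfolding Lat_def by blast
  have "c * of_int r' + c * w = of_int (i' * q + j' * r) + of_int j' * w" using ij' by (simp add: algebra_simps)
  then have "c = of_int j'" using rat_unique[of "c * of_int r'" c "of_int (i' * q + j' * r)" "of_int j'"] cR by simp
  then have j2: "of_int q = of_int Q * (of_int j' :: real)" unfolding c_def using Q by (simp add: field_simps)
  have "Q = q * j" using j1 by (metis of_int_eq_iff of_int_mult)
  moreover have "q = Q * j'" using j2 by (metis of_int_eq_iff of_int_mult)
  ultimately have "q = (q * j) * j'" by simp
  then have "q * (j * j' - 1) = 0" by (simp add: algebra_simps)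
  then have "j * j' = 1" using q by simp
  moreover have "j > 0" using \<open>Q = q * j\<close> q Q by (simp add: zero_less_mult_iff)
  ultimately have "j = 1" using zmult_eq_1_iff by auto
  then show ?thesis using \<open>Q = q * j\<close> by simp
qed

end

context qf begin

lemma box:
  assumes q: "q > 0" "of_int q < sq / 2" and xi: "\<xi> \<in> Lat q r" "\<xi> \<noteq> 0"
  shows "\<not> (\<bar>\<xi>\<bar> < of_int q \<and> \<bar>cnj \<xi>\<bar> < of_int q)"
proof
  assume h: "\<bar>\<xi>\<bar> < of_int q \<and> \<bar>cnj \<xi>\<bar> < of_int q"
  obtain i j where x: "\<xi> = of_int (i * q) + of_int j * (of_int r + w)" using xi(1) unfolding Lat_def by blast
  have x2: "\<xi> = of_int (i * q + j * r) + of_int j * w" unfolding x by (simp add: algebra_simps)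
  have cx: "cnj \<xi> = of_int (i * q + j * r) + of_int j * w'" unfolding x2 by (rule cnj_OK)
  have "\<xi> - cnj \<xi> = \<xi> - (of_int (i * q + j * r) + of_int j * w')" unfolding cx ..
  also have "\<dots> = of_int j * (w - w')" unfolding x2 by (simp add: algebra_simps)
  finally have "\<xi> - cnj \<xi> = of_int j * sq" using w_minus by simp
  then have "\<bar>of_int j * sq\<bar> < 2 * of_int q" using h by linarith
  also have "\<dots> < sq" using q by simp
  finally have a: "\<bar>of_int j\<bar> * sq < 1 * sq" using sq_pos by (simp add: abs_mult)
  then have "\<bar>of_int j\<bar> < (1::real)" using sq_pos by (simp only: mult_less_cancel_right)
  then have j0: "j = 0" by simp
  then have "\<bar>of_int i * of_int q\<bar> < (of_int q :: real)" using h x by simp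
  then have "\<bar>of_int i\<bar> * of_int q < 1 * (of_int q :: real)" using q by (simp add: abs_mult)
  then have "\<bar>of_int i\<bar> < (1::real)" using q by (simp only: mult_less_cancel_right)
  then have "i = 0" by simp
  then show False using xi(2) x j0 by simp
qed

lemma lagrange:
  assumes q: "q > 0" "q dvd Nm r" "of_int q < sq / 2" and gen: "generates D \<beta> (Lat q r)"
  shows "\<exists>n. 1 \<le> n \<and> n \<le> ss \<and> Lat q r = Ln n \<and> (even ss \<longrightarrow> (\<beta> * cnj \<beta> < 0 \<longleftrightarrow> odd n))"
proof -
  define I where "I = Lat q r"
  have bO: "\<beta> \<in> OK D" and Ieq: "I = {\<beta> * x | x. x \<in> OK D}" using gen unfolding generates_def I_def by auto
  have qI: "of_int q \<in> I" unfolding I_def using Lat_I[of 1 q 0 r] by simp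
  have b0: "\<beta> \<noteq> 0"
  proof
    assume "\<beta> = 0" then have "I \<subseteq> {0}" using Ieq by auto
    then show False using qI q by auto
  qed
  obtain b1 where b1: "b1 > 0" "b1 \<in> OK D" "I = {b1 * x | x. x \<in> OK D}" "b1 * cnj b1 = \<beta> * cnj \<beta>"
  proof (cases "\<beta> > 0")
    case True then show ?thesis using that bO Ieq by blast
  next
    case False
    then have bn: "- \<beta> > 0" using b0 by simp
    have "I = {(- \<beta>) * x | x. x \<in> OK D}"
    proof -
      have "{\<beta> * x | x. x \<in> OK D} = {(- \<beta>) * x | x. x \<in> OK D}"
      proof (intro set_eqI iffI)
        fix z assume "z \<in> {\<beta> * x | x. x \<in> OK D}"
        then obtain x where "x \<in> OK D" "z = \<beta> * x" by blast
        then have "- x \<in> OK D" "z = (- \<beta>) * (- x)" using OK_uminus by auto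
        then show "z \<in> {(- \<beta>) * x | x. x \<in> OK D}" by blast
      next
        fix z assume "z \<in> {(- \<beta>) * x | x. x \<in> OK D}"
        then obtain x where "x \<in> OK D" "z = (- \<beta>) * x" by blast
        then have "- x \<in> OK D" "z = \<beta> * (- x)" using OK_uminus by auto
        then show "z \<in> {\<beta> * x | x. x \<in> OK D}" by blast
      qed
      then show ?thesis using Ieq by simp
    qed
    moreover have "(- \<beta>) * cnj (- \<beta>) = \<beta> * cnj \<beta>" using cnj_uminus[OF OK_K[OF bO]] by simp
    ultimately show ?thesis using that bn OK_uminus[OF bO] by blast
  qed
  have b1K: "b1 \<in> Kset" using OK_K b1(2) by simp
  have cb0: "cnj b1 \<noteq> 0" using cnj_nonzero[OF b1K] b1 by simp
  obtain \<mu> where mu: "\<mu> \<in> OK D" "of_int q = b1 * \<mu>" using qI b1(3) by blast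
  have "b1 * \<mu> > 0" using mu(2) q(1) by simp
  then have mupos: "\<mu> > 0" using b1(1) by (simp add: zero_less_mult_iff)
  have muK: "\<mu> \<in> Kset" using OK_K mu by simp
  have "cnj b1 * cnj \<mu> = cnj (b1 * \<mu>)" using cnj_mult[OF b1K muK] by simp
  also have "\<dots> = cnj (of_int q)" using mu(2) by (simp only:)
  finally have cq: "cnj b1 * cnj \<mu> = of_int q" by simp
  have mmin: "minOK \<mu>" unfolding minOK_def
  proof (intro conjI)
    show "\<mu> \<in> OK D" by (rule mu(1))
    show "\<mu> \<noteq> 0" using mupos by simp
  next
    show "\<forall>\<xi>\<in>OK D. \<xi> \<noteq> 0 \<longrightarrow> \<not> (\<bar>\<xi>\<bar> < \<bar>\<mu>\<bar> \<and> \<bar>cnj \<xi>\<bar> < \<bar>cnj \<mu>\<bar>)"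
  proof (intro ballI impI notI)
    fix \<xi> assume xi: "\<xi> \<in> OK D" "\<xi> \<noteq> 0" and h: "\<bar>\<xi>\<bar> < \<bar>\<mu>\<bar> \<and> \<bar>cnj \<xi>\<bar> < \<bar>cnj \<mu>\<bar>"
    have xK: "\<xi> \<in> Kset" using OK_K xi by simp
    have m1: "b1 * \<xi> \<in> Lat q r" using b1(3) xi(1) unfolding I_def by blast
    have m2: "b1 * \<xi> \<noteq> 0" using xi b1 by simp
    have "\<bar>b1 * \<xi>\<bar> < of_int q"
    proof -
      have "\<bar>b1 * \<xi>\<bar> = b1 * \<bar>\<xi>\<bar>" using b1(1) by (simp add: abs_mult)
      also have "\<dots> < b1 * \<mu>" using h mupos b1(1) by simp
      finally show ?thesis using mu(2) by simp
    qed
    moreover have "\<bar>cnj (b1 * \<xi>)\<bar> < of_int q"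
    proof -
      have "\<bar>cnj (b1 * \<xi>)\<bar> = \<bar>cnj b1\<bar> * \<bar>cnj \<xi>\<bar>" using cnj_mult[OF b1K xK] by (simp add: abs_mult)
      also have "\<dots> < \<bar>cnj b1\<bar> * \<bar>cnj \<mu>\<bar>" using h cb0 by simp
      also have "\<dots> = of_int q" using cq q by (simp add: abs_mult[symmetric])
      finally show ?thesis .
    qed
    ultimately show False using box[OF q(1) q(3) m1 m2] by simp
  qed
  qed
  obtain \<eta> where eta: "unit \<eta>" "\<eta> \<in> Kset" "even ss \<longrightarrow> \<eta> * cnj \<eta> > 0" "1 / eps \<le> \<eta> * \<mu>" "\<eta> * \<mu> \<le> 1"
    using scale[OF mupos] by blast
  have tmin: "minOK (\<eta> * \<mu>)" by (rule unit_scale[OF eta(1) mmin])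
  obtain n where n: "n \<le> ss" "\<eta> * \<mu> = 1 / XX n" using search[OF tmin _ eta(5)] eta(4) unfolding eps_def by blast
  have eO: "\<eta> \<in> OK D" "1 / \<eta> \<in> OK D" "\<eta> \<noteq> 0" using eta(1) unfolding unit_def by auto
  have Xp: "XX n > 0" by (rule XX_pos)
  have b1e: "b1 = of_int q * \<eta> * XX n"
  proof -
    have "b1 * (\<eta> * \<mu>) = of_int q * \<eta>" using mu(2) by (simp add: algebra_simps)
    then have "b1 / XX n = of_int q * \<eta>" using n(2) by simp
    then show ?thesis using Xp by (simp add: field_simps)
  qed
  have Ieq2: "I = (\<lambda>z. (of_int q / of_int (QQ n)) * z) ` Ln n"
  proof -
    have qn: "(of_int (QQ n) :: real) \<noteq> 0" using QQ_nz by simp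
    have "I = {of_int q * XX n * y | y. y \<in> OK D}"
    proof (intro set_eqI iffI)
      fix z assume "z \<in> I"
      then obtain x where x: "x \<in> OK D" "z = b1 * x" using b1(3) by blast
      then have "\<eta> * x \<in> OK D" "z = of_int q * XX n * (\<eta> * x)" using OK_mult eO b1e by (auto simp: algebra_simps)
      then show "z \<in> {of_int q * XX n * y | y. y \<in> OK D}" by blast
    next
      fix z assume "z \<in> {of_int q * XX n * y | y. y \<in> OK D}"
      then obtain y where y: "y \<in> OK D" "z = of_int q * XX n * y" by blast
      have "y * (1 / \<eta>) \<in> OK D" using OK_mult y(1) eO(2) by blast
      moreover have "z = b1 * (y * (1 / \<eta>))" using y(2) b1e eO(3) by (simp add: field_simps)
      ultimately show "z \<in> I" using b1(3) by blast
    qed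
    also have "\<dots> = (\<lambda>z. (of_int q / of_int (QQ n)) * z) ` Ln n"
    proof (intro set_eqI iffI)
      fix z assume "z \<in> {of_int q * XX n * y | y. y \<in> OK D}"
      then obtain y where y: "y \<in> OK D" "z = of_int q * XX n * y" by blast
      have "Gen n * y \<in> Ln n" unfolding Ln_gen using y(1) by blast
      moreover have "z = (of_int q / of_int (QQ n)) * (Gen n * y)" unfolding Gen_def y(2) using qn by simp
      ultimately show "z \<in> (\<lambda>z. (of_int q / of_int (QQ n)) * z) ` Ln n" by blast
    next
      fix z assume "z \<in> (\<lambda>z. (of_int q / of_int (QQ n)) * z) ` Ln n"
      then obtain v where v: "v \<in> Ln n" "z = (of_int q / of_int (QQ n)) * v" by blast
      then obtain y where y: "y \<in> OK D" "v = Gen n * y" unfolding Ln_gen by blast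
      have "z = of_int q * XX n * y" unfolding v(2) y(2) Gen_def using qn by simp
      then show "z \<in> {of_int q * XX n * y | y. y \<in> OK D}" using y(1) by blast
    qed
    finally show ?thesis .
  qed
  have qe: "q = QQ n" using Lat_scale_eq[OF q(1) QQ_pos'[of n]] Ieq2 unfolding I_def Ln_def by simp
  then have ILn: "I = Ln n" using Ieq2 QQ_nz[of n] by simp
  define n' where "n' = (if n = 0 then ss else n)"
  have n'1: "1 \<le> n'" "n' \<le> ss" using n(1) ss_ge1 unfolding n'_def by auto
  have In': "I = Ln n'" using ILn Ln_0 Ln_ss unfolding n'_def by simp
  have sgn: "even ss \<longrightarrow> (\<beta> * cnj \<beta> < 0 \<longleftrightarrow> odd n')"
  proof
    assume ev: "even ss"
    have XK: "XX n \<in> Kset" "cnj (XX n) = XC n" using XX_K by auto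
    have qK: "of_int q * \<eta> \<in> Kset" using K_mult[OF K_int eta(2)] by simp
    have "cnj b1 = of_int q * cnj \<eta> * XC n"
      unfolding b1e using cnj_mult[OF qK XK(1)] cnj_mult[OF K_int eta(2)] XK(2) by simp
    then have "\<beta> * cnj \<beta> = (of_int q) ^ 2 * (\<eta> * cnj \<eta>) * (XX n * XC n)"
      using b1(4)[symmetric] b1e by (simp add: power2_eq_square algebra_simps)
    moreover have "(of_int q :: real) ^ 2 > 0" using q by simp
    moreover have "\<eta> * cnj \<eta> > 0" using eta(3) ev by simp
    ultimately have "\<beta> * cnj \<beta> < 0 \<longleftrightarrow> XX n * XC n < 0"
      by (metis mult_pos_pos zero_less_mult_iff not_less_iff_gr_or_eq mult_less_0_iff)
    also have "\<dots> \<longleftrightarrow> XC n < 0" using Xp by (simp add: mult_less_0_iff)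
    also have "\<dots> \<longleftrightarrow> odd n"
      using XC_sign[of n] by (cases "even n") (auto simp: zero_less_mult_iff)
    also have "\<dots> \<longleftrightarrow> odd n'" unfolding n'_def using ev by auto
    finally show "\<beta> * cnj \<beta> < 0 \<longleftrightarrow> odd n'" .
  qed
  show ?thesis using n'1 In' sgn unfolding I_def by blast
qed

end

context qf begin

lemma QQ_real: "real (nat (QQ n)) = of_int (QQ n)"
  using QQ_pos'[of n] by simp

lemma Ln_PP: "n \<ge> 1 \<Longrightarrow> Ln n \<in> PP D sq"
  unfolding PP_def using Ln_ideal Ln_prim Gen_generates Ln_norm QQ_real QQ_lt_sq by auto

lemma Ln_inj: "inj_on Ln {1..ss}"
proof (rule inj_onI)
  fix i j assume i: "i \<in> {1..ss}" and j: "j \<in> {1..ss}" and e: "Ln i = Ln j"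
  have q: "QQ i = QQ j" using Ln_norm[of i] Ln_norm[of j] e QQ_pos'[of i] QQ_pos'[of j] by simp
  have "Lat (QQ i) (rr i) = Lat (QQ i) (rr j)" using e q unfolding Ln_def by simp
  then have dv: "QQ i dvd rr i - rr j" using Lat_eq_dvd QQ_nz by blast
  have bi: "- of_int (QQ i) < of_int (rr i) + w' \<and> of_int (rr i) + w' < 0" using rr_bounds i by simp
  have bj: "- of_int (QQ i) < of_int (rr j) + w' \<and> of_int (rr j) + w' < 0" using rr_bounds j q by simp
  have "\<bar>of_int (rr i) - of_int (rr j)\<bar> < (of_int (QQ i) :: real)" using bi bj by linarith
  then have h: "real_of_int \<bar>rr i - rr j\<bar> < real_of_int (QQ i)" by simp
  then have a: "\<bar>rr i - rr j\<bar> < QQ i" using of_int_less_iff by blast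
  have "rr i = rr j"
  proof (rule ccontr)
    assume "rr i \<noteq> rr j"
    then have "\<bar>QQ i\<bar> \<le> \<bar>rr i - rr j\<bar>" using dvd_imp_le_int dv by simp
    then show False using a QQ_pos'[of i] by simp
  qed
  then have "st i = st j" using q st_eq by simp
  then show "i = j" using st_distinct i j by (metis atLeastAtMost_iff linorder_neqE_nat)
qed

lemma PP_small: "PP D (sq / 2) \<subseteq> Ln ` {1..ss}"
proof
  fix I assume "I \<in> PP D (sq / 2)"
  then have I: "nonzero_ideal D I" "primitive D I" "\<exists>\<alpha>. generates D \<alpha> I" "real (ideal_norm D I) < sq / 2"
    unfolding PP_def by auto
  obtain q r where qr: "q > 0" "q dvd Nm r" "I = Lat q r" using classify[OF I(1,2)] by blast
  obtain \<beta> where g: "generates D \<beta> (Lat q r)" using I(3) qr by blast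
  have "of_int q < sq / 2" using I(4) qr ideal_norm_Lat by simp
  then obtain n where "1 \<le> n" "n \<le> ss" "Lat q r = Ln n" using lagrange[OF qr(1,2) _ g] by blast
  then show "I \<in> Ln ` {1..ss}" using qr by auto
qed

lemma neg_norm_iff: "\<alpha> \<in> OK D \<Longrightarrow> neg_norm D \<alpha> \<longleftrightarrow> \<alpha> * cnj \<alpha> < 0"
proof -
  assume a: "\<alpha> \<in> OK D"
  then obtain a b where ab: "\<alpha> = of_int a + of_int b * w" by (metis OKE)
  have c: "cnj \<alpha> = of_int a + of_int b * w'" unfolding ab by (rule cnj_OK)
  show ?thesis
  proof
    assume "neg_norm D \<alpha>"
    then obtain a' b' where h: "\<alpha> = of_int a' + of_int b' * w"
      "(of_int a' + of_int b' * w) * (of_int a' + of_int b' * w') < 0" unfolding neg_norm_def by blast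
    have "of_int a' + of_int b' * w = of_int a + of_int b * w" using h(1) ab by simp
    then have "a' = a \<and> b' = b" by (rule int_unique)
    then show "\<alpha> * cnj \<alpha> < 0" using h(2) ab c by simp
  next
    assume h: "\<alpha> * cnj \<alpha> < 0"
    have "(of_int a + of_int b * w) * (of_int a + of_int b * w') < 0" using h unfolding c unfolding ab .
    then show "neg_norm D \<alpha>" unfolding neg_norm_def using ab by blast
  qed
qed

lemma Gen_neg: "odd n \<Longrightarrow> neg_norm D (Gen n)"
proof -
  assume o: "odd n"
  have "XC n < 0" using XC_sign[of n] o by (simp add: zero_less_mult_iff)
  then have "XX n * XC n < 0" using XX_pos[of n] by (simp add: mult_pos_neg)
  moreover have "(of_int (QQ n) :: real) ^ 2 > 0" using QQ_nz[of n] by simp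
  ultimately have "Gen n * cnj (Gen n) < 0" unfolding Gen_norm by (simp add: mult_pos_neg)
  then show ?thesis using neg_norm_iff Gen_OK by simp
qed

lemma Ln_PN: assumes "n \<ge> 1" "odd n" shows "Ln n \<in> PN D sq"
proof -
  have g: "\<exists>\<alpha>. generates D \<alpha> (Ln n) \<and> neg_norm D \<alpha>" using Gen_generates Gen_neg assms by blast
  have "real (ideal_norm D (Ln n)) < sq" using Ln_norm QQ_real QQ_lt_sq by simp
  then show ?thesis unfolding PN_def using Ln_ideal Ln_prim g by blast
qed

lemma PN_small: "even ss \<Longrightarrow> PN D (sq / 2) \<subseteq> Ln ` {i. i \<in> {1..<ss} \<and> odd i}"
proof
  fix I assume ev: "even ss" and "I \<in> PN D (sq / 2)"
  then have I: "nonzero_ideal D I" "primitive D I" "\<exists>\<alpha>. generates D \<alpha> I \<and> neg_norm D \<alpha>"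
      "real (ideal_norm D I) < sq / 2"
    unfolding PN_def by auto
  obtain q r where qr: "q > 0" "q dvd Nm r" "I = Lat q r" using classify[OF I(1,2)] by blast
  obtain \<beta> where g: "generates D \<beta> (Lat q r)" "neg_norm D \<beta>" using I(3) qr by blast
  have bO: "\<beta> \<in> OK D" using g unfolding generates_def by simp
  have neg: "\<beta> * cnj \<beta> < 0" using g(2) neg_norm_iff[OF bO] by simp
  have "of_int q < sq / 2" using I(4) qr ideal_norm_Lat by simp
  then obtain n where n: "1 \<le> n" "n \<le> ss" "Lat q r = Ln n" "even ss \<longrightarrow> (\<beta> * cnj \<beta> < 0 \<longleftrightarrow> odd n)"
    using lagrange[OF qr(1,2) _ g(1)] by blast
  have "odd n" using n(4) ev neg by simp
  then have "n < ss" using n(2) ev by (metis le_neq_implies_less)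
  then show "I \<in> Ln ` {i. i \<in> {1..<ss} \<and> odd i}" using qr n \<open>odd n\<close> by auto
qed

lemma PN_eq_PP: "odd ss \<Longrightarrow> PN D X = PP D X"
proof
  assume o: "odd ss"
  show "PN D X \<subseteq> PP D X" by (rule PN_sub)
  show "PP D X \<subseteq> PN D X"
  proof
    fix I assume "I \<in> PP D X"
    then have I: "nonzero_ideal D I" "primitive D I" "\<exists>\<alpha>. generates D \<alpha> I" "real (ideal_norm D I) < X"
      unfolding PP_def by auto
    obtain \<beta> where g: "generates D \<beta> I" using I(3) by blast
    have bO: "\<beta> \<in> OK D" and Ieq: "I = {\<beta> * x | x. x \<in> OK D}" using g unfolding generates_def by auto
    have b0: "\<beta> \<noteq> 0" using I(1) Ieq unfolding nonzero_ideal_def by auto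
    have bK: "\<beta> \<in> Kset" using OK_K bO by simp
    have cb: "cnj \<beta> \<noteq> 0" using cnj_nonzero[OF bK b0] .
    have "\<exists>\<alpha>. generates D \<alpha> I \<and> neg_norm D \<alpha>"
    proof (cases "\<beta> * cnj \<beta> < 0")
      case True then show ?thesis using g neg_norm_iff[OF bO] by blast
    next
      case False
      then have pos: "\<beta> * cnj \<beta> > 0" using b0 cb by (simp add: not_less le_less)
      define \<alpha> where "\<alpha> = \<beta> * eps"
      have aO: "\<alpha> \<in> OK D" unfolding \<alpha>_def using OK_mult bO eps_OK by blast
      have eK: "eps \<in> Kset" using eps_K by simp
      have "\<alpha> * cnj \<alpha> = (\<beta> * cnj \<beta>) * Neps"
        unfolding \<alpha>_def Neps_def using cnj_mult[OF bK eK] by (simp add: algebra_simps)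
      then have "\<alpha> * cnj \<alpha> < 0" using pos Neps_odd[OF o] by (simp add: mult_pos_neg)
      then have nn: "neg_norm D \<alpha>" using neg_norm_iff[OF aO] by simp
      have "I = {\<alpha> * x | x. x \<in> OK D}"
      proof (intro set_eqI iffI)
        fix z assume "z \<in> I"
        then obtain x where x: "x \<in> OK D" "z = \<beta> * x" using Ieq by blast
        have "x * (1 / eps) \<in> OK D" using OK_mult x(1) eps_inv_OK by blast
        moreover have "z = \<alpha> * (x * (1 / eps))" unfolding \<alpha>_def x(2) using eps_gt1 by simp
        ultimately show "z \<in> {\<alpha> * x | x. x \<in> OK D}" by blast
      next
        fix z assume "z \<in> {\<alpha> * x | x. x \<in> OK D}"
        then obtain x where x: "x \<in> OK D" "z = \<alpha> * x" by blast
        have "eps * x \<in> OK D" using OK_mult x(1) eps_OK by blast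
        moreover have "z = \<beta> * (eps * x)" unfolding \<alpha>_def x(2) by simp
        ultimately show "z \<in> I" using Ieq by blast
      qed
      then have "generates D \<alpha> I" unfolding generates_def using aO by simp
      then show ?thesis using nn by blast
    qed
    then show "I \<in> PN D X" unfolding PN_def using I by blast
  qed
qed

lemma bounds_generic:
  fixes S :: "nat set" and A B :: "real set set"
  assumes S: "finite S" "S \<noteq> {}" "S \<subseteq> {1..ss}" and inj: "inj_on Ln S"
    and B: "Ln ` S \<subseteq> B" "finite B" and A: "A \<subseteq> Ln ` S"
  shows "(\<Sum>I\<in>A. sq / real (ideal_norm D I)) - 2 * real (card B) < real_of_int (\<Sum>i\<in>S. uu i)
       \<and> real_of_int (\<Sum>i\<in>S. uu i) < (\<Sum>I\<in>B. sq / real (ideal_norm D I))"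
proof -
  define f where "f I = sq / real (ideal_norm D I)" for I
  have fnn: "f I \<ge> 0" for I unfolding f_def using sq_pos by simp
  have S1: "i \<in> S \<Longrightarrow> i \<ge> 1" for i using S(3) by auto
  have re: "(\<Sum>I\<in>Ln ` S. f I) = (\<Sum>i\<in>S. sq / of_int (QQ i))"
    using sum.reindex[OF inj, of f] unfolding f_def by (simp add: Ln_norm QQ_real)
  have u: "real_of_int (\<Sum>i\<in>S. uu i) = (\<Sum>i\<in>S. of_int (uu i))" by simp
  have up: "(\<Sum>i\<in>S. of_int (uu i)) < (\<Sum>i\<in>S. sq / of_int (QQ i))"
    using S(1,2) uu_upper S1 by (intro sum_strict_mono) auto
  have lo: "(\<Sum>i\<in>S. sq / of_int (QQ i)) < (\<Sum>i\<in>S. (of_int (uu i) + 2))"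
    using S(1,2) uu_lower S1 by (intro sum_strict_mono) (auto simp: algebra_simps)
  have lo2: "(\<Sum>i\<in>S. (of_int (uu i) + 2)) = (\<Sum>i\<in>S. of_int (uu i)) + 2 * real (card S)"
    by (simp add: sum.distrib)
  have cS: "card S = card (Ln ` S)" using card_image[OF inj] by simp
  have cB: "card (Ln ` S) \<le> card B" using card_mono[OF B(2) B(1)] .
  have LB: "(\<Sum>I\<in>Ln ` S. f I) \<le> (\<Sum>I\<in>B. f I)"
    using B fnn by (intro sum_mono2) auto
  have AL: "(\<Sum>I\<in>A. f I) \<le> (\<Sum>I\<in>Ln ` S. f I)"
    using A S(1) fnn by (intro sum_mono2) auto
  have 1: "(\<Sum>I\<in>A. f I) - 2 * real (card B) < (\<Sum>i\<in>S. of_int (uu i))"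
  proof -
    have "(\<Sum>I\<in>A. f I) < (\<Sum>i\<in>S. of_int (uu i)) + 2 * real (card S)" using AL re lo lo2 by linarith
    moreover have "real (card S) \<le> real (card B)" using cS cB by simp
    ultimately show ?thesis by linarith
  qed
  have 2: "(\<Sum>i\<in>S. of_int (uu i)) < (\<Sum>I\<in>B. f I)" using up re LB by linarith
  show ?thesis using 1 2 u unfolding f_def by simp
qed

lemma partA:
  "(\<Sum>I\<in>PP D (sq / 2). sq / real (ideal_norm D I)) - 2 * real (card (PP D sq))
     < real_of_int (\<Sum>i\<in>{1..cf_period (omega D)}. cf (omega D) i)
   \<and> real_of_int (\<Sum>i\<in>{1..cf_period (omega D)}. cf (omega D) i)
     < (\<Sum>I\<in>PP D sq. sq / real (ideal_norm D I))"
proof -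
  have e: "(\<Sum>i\<in>{1..cf_period (omega D)}. cf (omega D) i) = (\<Sum>i\<in>{1..ss}. uu i)"
    unfolding ss_def[symmetric] cf_uu ..
  have "Ln ` {1..ss} \<subseteq> PP D sq" using Ln_PP by auto
  then show ?thesis unfolding e
    using bounds_generic[of "{1..ss}" "PP D sq" "PP D (sq / 2)"] ss_ge1 Ln_inj PP_finite PP_small
    by simp
qed

lemma MD_odd: "odd ss \<Longrightarrow> MD D = (\<Sum>i\<in>{1..ss}. uu i)"
proof -
  assume o: "odd ss"
  have "MD D = 2 * uu 0 + (\<Sum>i\<in>{1..<ss}. uu i) - sg"
    unfolding MD_def Let_def ss_def[symmetric] cf_uu sg_def using o by simp
  also have "\<dots> = (\<Sum>i\<in>{1..<ss}. uu i) + uu ss" using uu_ss by simp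
  also have "\<dots> = (\<Sum>i\<in>{1..<Suc ss}. uu i)" using ss_ge1 by simp
  also have "{1..<Suc ss} = {1..ss}" by auto
  finally show ?thesis .
qed

lemma MD_even: "even ss \<Longrightarrow> MD D = (\<Sum>i\<in>{i. i \<in> {1..<ss} \<and> odd i}. uu i)"
  unfolding MD_def Let_def ss_def[symmetric] cf_uu by simp

lemma partB:
  "(\<Sum>I\<in>PN D (sq / 2). sq / real (ideal_norm D I)) - 2 * real (card (PN D sq))
     < real_of_int (MD D)
   \<and> real_of_int (MD D) < (\<Sum>I\<in>PN D sq. sq / real (ideal_norm D I))"
proof (cases "even ss")
  case True
  define S where "S = {i. i \<in> {1..<ss} \<and> odd i}"
  have fS: "finite S" unfolding S_def by simp
  have "1 \<in> S" unfolding S_def using True ss_ge1 by (cases "ss = 1") auto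
  then have neS: "S \<noteq> {}" by blast
  have sub: "S \<subseteq> {1..ss}" unfolding S_def by auto
  have inj: "inj_on Ln S" using Ln_inj sub by (rule inj_on_subset)
  have B: "Ln ` S \<subseteq> PN D sq" using Ln_PN unfolding S_def by auto
  show ?thesis using bounds_generic[OF fS neS sub inj B PN_finite PN_small[OF True, folded S_def]]
    MD_even[OF True, folded S_def] by simp
next
  case False
  then have o: "odd ss" by simp
  show ?thesis using partA unfolding PN_eq_PP[OF o] MD_odd[OF o] ss_def cf_uu[symmetric] by simp
qed

end

theorem corollary7:
  shows "(\<exists>C::real. \<forall>D::int. D > 1 \<longrightarrow> squarefree D \<longrightarrow>
            (\<Sum>I\<in>PP D (sqrt (real_of_int (disc D)) / 2). sqrt (real_of_int (disc D)) / real (ideal_norm D I))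
              - C * real (card (PP D (sqrt (real_of_int (disc D)))))
            < real_of_int (\<Sum>i\<in>{1..cf_period (omega D)}. cf (omega D) i)
          \<and> real_of_int (\<Sum>i\<in>{1..cf_period (omega D)}. cf (omega D) i)
            < (\<Sum>I\<in>PP D (sqrt (real_of_int (disc D))). sqrt (real_of_int (disc D)) / real (ideal_norm D I)))
       \<and> (\<exists>C::real. \<forall>D::int. D > 1 \<longrightarrow> squarefree D \<longrightarrow>
            (\<Sum>I\<in>PN D (sqrt (real_of_int (disc D)) / 2). sqrt (real_of_int (disc D)) / real (ideal_norm D I))
              - C * real (card (PN D (sqrt (real_of_int (disc D)))))
            < real_of_int (MD D)
          \<and> real_of_int (MD D)
            < (\<Sum>I\<in>PN D (sqrt (real_of_int (disc D))). sqrt (real_of_int (disc D)) / real (ideal_norm D I)))"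
proof (intro conjI exI[of _ 2] allI impI)
  fix D :: int assume D: "D > 1" "squarefree D"
  interpret qf D using D by unfold_locales
  show "(\<Sum>I\<in>PP D (sqrt (real_of_int (disc D)) / 2). sqrt (real_of_int (disc D)) / real (ideal_norm D I))
              - 2 * real (card (PP D (sqrt (real_of_int (disc D)))))
            < real_of_int (\<Sum>i\<in>{1..cf_period (omega D)}. cf (omega D) i)"
    using partA unfolding sq_def by simp
  show "real_of_int (\<Sum>i\<in>{1..cf_period (omega D)}. cf (omega D) i)
            < (\<Sum>I\<in>PP D (sqrt (real_of_int (disc D))). sqrt (real_of_int (disc D)) / real (ideal_norm D I))"
    using partA unfolding sq_def by simp
next
  fix D :: int assume D: "D > 1" "squarefree D"
  interpret qf D using D by unfold_locales
  show "(\<Sum>I\<in>PN D (sqrt (real_of_int (disc D)) / 2). sqrt (real_of_int (disc D)) / real (ideal_norm D I))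
              - 2 * real (card (PN D (sqrt (real_of_int (disc D)))))
            < real_of_int (MD D)"
    using partB unfolding sq_def by simp
  show "real_of_int (MD D)
            < (\<Sum>I\<in>PN D (sqrt (real_of_int (disc D))). sqrt (real_of_int (disc D)) / real (ideal_norm D I))"
    using partB unfolding sq_def by simp
qed


end
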